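(* Let $k\ge1$ and $B>0$ be constants. Consider the Ising model on the complete bipartite graph with parts $V_L,V_R$, $|V_L|=n$, $|V_R|=kn$, with $\beta_{uv}=-\frac12\log(1-\frac{B}{n\sqrt k})$ for all edges and $\gamma_v=0$ for all $v$. For each $n$ let $(\hat\alpha_L^{(n)},\hat\alpha_R^{(n)})$ be a phase maximizing $\Pr(\alpha_L,\alpha_R)$. Then as $n\to\infty$, $(\hat\alpha_L^{(n)},\hat\alpha_R^{(n)})\to(1/2,1/2)$ if $B\le2$, and $(\hat\alpha_L^{(n)},\hat\alpha_R^{(n)})\to(\alpha_L^*,\alpha_R^* )$ if $B>2$, where $(\alpha_L^*,\alpha_R^* )$ is the unique solution in $(1/2,1)^2$ of $\exp(B\sqrt k(1-2\alpha_R))=\frac{1-\alpha_L}{\alpha_L}$, $\exp(\frac{B}{\sqrt k}(1-2\alpha_L))=\frac{1-\alpha_R}{\alpha_R}$.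
   Context: Ising model: $\mu(\sigma)\propto\exp(\sum_{(u,v)\in E}\beta_{uv}\sigma_u\sigma_v)$ on $\{-1,1\}^{V_L\cup V_R}$. Phase: for $\sigma$, let $V_s(\sigma)$ be the set of vertices of spin $s$ and let $s$ be a spin with $|V_s(\sigma)|\ge(|V_L|+|V_R|)/2$; then $\alpha(\sigma)=\big(|V_s(\sigma)\cap V_L|/|V_L|,\,|V_s(\sigma)\cap V_R|/|V_R|\big)$. $\Pr(\alpha_L,\alpha_R)=\sum_{\sigma:\alpha(\sigma)=(\alpha_L,\alpha_R)}\mu(\sigma)$. *)

theory Defs
  imports "HOL-Analysis.Analysis"
begin

definition spin_configs :: "'v set \<Rightarrow> ('v \<Rightarrow> int) set" where
  "spin_configs V = PiE V (\<lambda>_. {-1, 1})"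

definition ising_weight :: "('v \<times> 'v) set \<Rightarrow> ('v \<Rightarrow> 'v \<Rightarrow> real) \<Rightarrow> ('v \<Rightarrow> int) \<Rightarrow> real" where
  "ising_weight E \<beta> \<sigma> = exp (\<Sum>(u,v)\<in>E. \<beta> u v * real_of_int (\<sigma> u) * real_of_int (\<sigma> v))"

definition ising_Z :: "'v set \<Rightarrow> ('v \<times> 'v) set \<Rightarrow> ('v \<Rightarrow> 'v \<Rightarrow> real) \<Rightarrow> real" where
  "ising_Z V E \<beta> = (\<Sum>\<sigma>\<in>spin_configs V. ising_weight E \<beta> \<sigma>)"

definition ising_mu :: "'v set \<Rightarrow> ('v \<times> 'v) set \<Rightarrow> ('v \<Rightarrow> 'v \<Rightarrow> real) \<Rightarrow> ('v \<Rightarrow> int) \<Rightarrow> real" where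
  "ising_mu V E \<beta> \<sigma> = ising_weight E \<beta> \<sigma> / ising_Z V E \<beta>"

definition majority_spin :: "'v set \<Rightarrow> 'v set \<Rightarrow> ('v \<Rightarrow> int) \<Rightarrow> int" where
  "majority_spin VL VR \<sigma> =
     (if 2 * card {v \<in> VL \<union> VR. \<sigma> v = 1} \<ge> card VL + card VR then 1 else -1)"

definition phase :: "'v set \<Rightarrow> 'v set \<Rightarrow> ('v \<Rightarrow> int) \<Rightarrow> real \<times> real" where
  "phase VL VR \<sigma> =
     (let s = majority_spin VL VR \<sigma> in
       (real (card {v \<in> VL. \<sigma> v = s}) / real (card VL),
        real (card {v \<in> VR. \<sigma> v = s}) / real (card VR)))"

definition phase_prob :: "'v set \<Rightarrow> 'v set \<Rightarrow> ('v \<times> 'v) set \<Rightarrow> ('v \<Rightarrow> 'v \<Rightarrow> real)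
    \<Rightarrow> real \<times> real \<Rightarrow> real" where
  "phase_prob VL VR E \<beta> a =
     (\<Sum>\<sigma>\<in>{\<sigma> \<in> spin_configs (VL \<union> VR). phase VL VR \<sigma> = a}. ising_mu (VL \<union> VR) E \<beta> \<sigma>)"

definition VLn :: "nat \<Rightarrow> (nat + nat) set" where
  "VLn n = Inl ` {..<n}"

definition VRn :: "nat \<Rightarrow> nat \<Rightarrow> (nat + nat) set" where
  "VRn k n = Inr ` {..<k * n}"

definition beta_n :: "nat \<Rightarrow> real \<Rightarrow> nat \<Rightarrow> real" where
  "beta_n k B n = - (1/2) * ln (1 - B / (real n * sqrt (real k)))"

definition Pr_bip :: "nat \<Rightarrow> real \<Rightarrow> nat \<Rightarrow> real \<times> real \<Rightarrow> real" where
  "Pr_bip k B n a =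
     phase_prob (VLn n) (VRn k n) (VLn n \<times> VRn k n) (\<lambda>_ _. beta_n k B n) a"

end

theory Submission
  imports Defs "HOL-Real_Asymp.Real_Asymp"
begin

definition Hent :: "real \<Rightarrow> real" where
  "Hent a = - (a * ln a) - (1 - a) * ln (1 - a)"

lemma Hent_sym: "Hent (1 - a) = Hent a"
  unfolding Hent_def by simp

lemma Hent_0 [simp]: "Hent 0 = 0" and Hent_1 [simp]: "Hent 1 = 0"
  unfolding Hent_def by simp_all

lemma ln_less_minus_one_strict:
  fixes x :: real assumes "0 < x" "x \<noteq> 1" shows "ln x < x - 1"
proof -
  have s: "sqrt x > 0" "sqrt x \<noteq> 1" using assms by auto
  have "ln x = 2 * ln (sqrt x)" using assms by (simp add: ln_sqrt)
  also have "\<dots> \<le> 2 * (sqrt x - 1)" using ln_le_minus_one[OF s(1)] by simp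
  also have "\<dots> < x - 1"
  proof -
    have "(sqrt x - 1)^2 > 0" using s by simp
    then show ?thesis using assms by (simp add: power2_eq_square algebra_simps)
  qed
  finally show ?thesis .
qed

lemma xlnx_tendsto: "((\<lambda>x::real. x * ln x) \<longlongrightarrow> 0) (at_right 0)"
  by real_asymp

lemma cont_xlnx: "continuous_on {0..} (\<lambda>x::real. x * ln x)"
proof (clarsimp simp: continuous_on_eq_continuous_within)
  fix x :: real assume x: "0 \<le> x"
  show "continuous (at x within {0..}) (\<lambda>x. x * ln x)"
  proof (cases "x = 0")
    case True
    have "at (0::real) within {0..} = at_right 0"
      by (rule at_within_Ici_at_right)
    then show ?thesis using True xlnx_tendsto by (simp add: continuous_within)
  next
    case False
    then have "isCont (\<lambda>x. x * ln x) x" using x by (auto intro!: continuous_intros)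
    then show ?thesis using continuous_at_imp_continuous_within by blast
  qed
qed

lemma cont_Hent: "continuous_on {0..1} Hent"
proof -
  have c1: "continuous_on {0..1} (\<lambda>a::real. a * ln a)"
    using cont_xlnx by (rule continuous_on_subset) auto
  have c2: "continuous_on {0..1} (\<lambda>a::real. (1 - a) * ln (1 - a))"
    by (rule continuous_on_compose2[OF cont_xlnx, of "{0..1}" "\<lambda>a. 1 - a"])
       (auto intro!: continuous_intros)
  show ?thesis unfolding Hent_def[abs_def]
    by (intro continuous_on_diff continuous_on_minus c1 c2)
qed

lemma tanh_exp: "tanh (t::real) = (exp t - exp (-t)) / (exp t + exp (-t))"
proof -
  have "exp t + exp (-t) > 0" by (simp add: add_pos_pos)
  then show ?thesis by (simp add: tanh_def sinh_field_def cosh_field_def divide_simps) (simp add: algebra_simps)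
qed

lemma conj_ineq:
  fixes a t :: real assumes a: "0 \<le> a" "a \<le> 1"
  shows "Hent a + t * (2*a - 1) \<le> ln (exp t + exp (-t))"
    and "2*a - 1 \<noteq> tanh t \<Longrightarrow> Hent a + t * (2*a - 1) < ln (exp t + exp (-t))"
proof -
  define S where "S = exp t + exp (-t)"
  have S: "S > 0" unfolding S_def by (simp add: add_pos_pos)
  have main: "Hent a + t * (2*a - 1) \<le> ln S \<and> (2*a - 1 \<noteq> tanh t \<longrightarrow> Hent a + t * (2*a - 1) < ln S)"
  proof (cases "a = 0 \<or> a = 1")
    case True
    have "exp t < S" "exp (-t) < S" by (auto simp: S_def)
    then have l1: "ln S > t" and l2: "ln S > -t"
      using ln_less_cancel_iff[of "exp t" S] ln_less_cancel_iff[of "exp (-t)" S] S by auto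
    show ?thesis using True l1 l2 by auto
  next
    case False
    then have a0: "0 < a" "a < 1" using a by auto
    define u where "u = exp t / (a * S)"
    define v where "v = exp (-t) / ((1 - a) * S)"
    have u0: "u > 0" and v0: "v > 0" using a0 S by (auto simp: u_def v_def)
    have lu: "ln u = t - ln a - ln S" using a0 S by (simp add: u_def ln_div ln_mult)
    have lv: "ln v = -t - ln (1 - a) - ln S" using a0 S by (simp add: v_def ln_div ln_mult)
    have key: "ln S - (Hent a + t * (2*a - 1)) = - (a * ln u) - (1 - a) * ln v"
      unfolding lu lv Hent_def by (simp add: algebra_simps)
    have au: "a * u = exp t / S" using a0 S by (simp add: u_def)
    have av: "(1 - a) * v = exp (-t) / S" using a0 S by (simp add: v_def)
    have "exp t / S + exp (-t) / S = 1" using S by (simp add: S_def add_divide_distrib[symmetric])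
    then have sum0: "a * (u - 1) + (1 - a) * (v - 1) = 0"
      using au av by (simp add: algebra_simps)
    have i1: "a * ln u \<le> a * (u - 1)" using ln_le_minus_one[OF u0] a0 by (simp add: mult_left_mono)
    have i2: "(1 - a) * ln v \<le> (1 - a) * (v - 1)" using ln_le_minus_one[OF v0] a0 by (simp add: mult_left_mono)
    have strict: "2*a - 1 \<noteq> tanh t \<Longrightarrow> a * ln u < a * (u - 1)"
    proof -
      assume ne: "2*a - 1 \<noteq> tanh t"
      have "u \<noteq> 1"
      proof
        assume "u = 1"
        then have "exp t = a * S" using a0 S by (simp add: u_def field_simps)
        then have "2*a - 1 = tanh t" using S unfolding tanh_exp S_def[symmetric]
          by (simp add: S_def field_simps)
        with ne show False by simp
      qed
      then show ?thesis using ln_less_minus_one_strict[OF u0] a0 by simp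
    qed
    show ?thesis using key sum0 i1 i2 strict by linarith
  qed
  show "Hent a + t * (2*a - 1) \<le> ln (exp t + exp (-t))" using main S_def by simp
  show "2*a - 1 \<noteq> tanh t \<Longrightarrow> Hent a + t * (2*a - 1) < ln (exp t + exp (-t))" using main S_def by simp
qed

lemma Hent_half: "Hent (1/2) = ln 2"
  unfolding Hent_def by (simp add: ln_div)

lemma xlnx_deriv: "(u::real) > 0 \<Longrightarrow> ((\<lambda>x. x * ln x) has_real_derivative (ln u + 1)) (at u)"
  by (auto intro!: derivative_eq_intros)

lemma Phi_deriv:
  assumes "-1 < x" "x < 1"
  shows "((\<lambda>x. Hent ((1 + x) / 2)) has_real_derivative (- artanh x)) (at x)"
proof -
  have p: "(1 + x) / 2 > 0" "(1 - x) / 2 > 0" using assms by auto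
  have eq: "(\<lambda>x. Hent ((1 + x) / 2)) = (\<lambda>x. - ((1 + x) / 2 * ln ((1 + x) / 2)) - (1 - x) / 2 * ln ((1 - x) / 2))"
    by (rule ext) (simp add: Hent_def field_simps)
  have l1: "((\<lambda>x::real. (1 + x) / 2) has_real_derivative 1/2) (at x)"
    by (auto intro!: derivative_eq_intros)
  have l2: "((\<lambda>x::real. (1 - x) / 2) has_real_derivative -1/2) (at x)"
    by (auto intro!: derivative_eq_intros)
  have d1: "((\<lambda>x. (1 + x) / 2 * ln ((1 + x) / 2)) has_real_derivative (ln ((1 + x) / 2) + 1) * (1/2)) (at x)"
    using DERIV_chain2[OF xlnx_deriv[OF p(1)] l1] .
  have d2: "((\<lambda>x. (1 - x) / 2 * ln ((1 - x) / 2)) has_real_derivative (ln ((1 - x) / 2) + 1) * (-1/2)) (at x)"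
    using DERIV_chain2[OF xlnx_deriv[OF p(2)] l2] .
  have d: "((\<lambda>x. - ((1 + x) / 2 * ln ((1 + x) / 2)) - (1 - x) / 2 * ln ((1 - x) / 2)) has_real_derivative
       (- ((ln ((1 + x) / 2) + 1) * (1/2)) - (ln ((1 - x) / 2) + 1) * (-1/2))) (at x)"
    by (rule DERIV_diff[OF DERIV_minus[OF d1] d2])
  have e1: "ln ((1 + x) / 2) = ln (1 + x) - ln 2" using assms by (simp add: ln_div)
  have e3: "ln ((1 - x) / 2) = ln (1 - x) - ln 2" using assms by (simp add: ln_div)
  have e4: "artanh x = (ln (1 + x) - ln (1 - x)) / 2" using assms by (simp add: artanh_def ln_div)
  have "(- ((ln ((1 + x) / 2) + 1) * (1/2)) - (ln ((1 - x) / 2) + 1) * (-1/2)) = - artanh x"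
    unfolding e1 e3 e4 by (simp add: field_simps)
  then show ?thesis using d unfolding eq by simp
qed

lemma artanh_gt:
  fixes x :: real assumes "0 < x" "x < 1" shows "x < artanh x"
proof -
  have "(\<lambda>x. artanh x - x) 0 < (\<lambda>x. artanh x - x) x"
  proof (rule DERIV_pos_imp_increasing_open[OF assms(1)])
    fix y :: real assume y: "0 < y" "y < x"
    then have "y^2 < 1" using assms by (simp add: power_less_one_iff abs_less_iff) 
    moreover have "y^2 > 0" using y by simp
    ultimately have "1 / (1 - y^2) - 1 > 0" by (simp add: field_simps)
    moreover have "((\<lambda>x. artanh x - x) has_real_derivative (1 / (1 - y^2) - 1)) (at y)"
      using y assms by (auto intro!: derivative_eq_intros)
    ultimately show "\<exists>d. ((\<lambda>x. artanh x - x) has_real_derivative d) (at y) \<and> d > 0" by blast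
  next
    show "continuous_on {0..x} (\<lambda>x. artanh x - x)"
      using assms by (intro continuous_intros) auto
  qed
  then show ?thesis by simp
qed

lemma cont_Phi: "continuous_on {-1..1} (\<lambda>x. Hent ((1 + x) / 2))"
  by (rule continuous_on_compose2[OF cont_Hent]) (auto intro!: continuous_intros)

lemma Phi_quad_pos:
  fixes x :: real assumes "0 < x" "x \<le> 1"
  shows "Hent ((1 + x) / 2) < ln 2 - x^2 / 2"
proof (cases "x = 1")
  case True
  then show ?thesis using ln2_ge_two_thirds by simp
next
  case False
  then have x1: "x < 1" using assms by simp
  define psi where "psi = (\<lambda>x::real. ln 2 - x^2 / 2 - Hent ((1 + x) / 2))"
  have "psi 0 < psi x"
  proof (rule DERIV_pos_imp_increasing_open[OF assms(1)])
    fix y :: real assume y: "0 < y" "y < x"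
    have d1: "((\<lambda>x::real. x^2 / 2) has_real_derivative y) (at y)"
      by (auto intro!: derivative_eq_intros)
    have "(psi has_real_derivative (0 - y - (- artanh y))) (at y)"
      unfolding psi_def using y x1
      by (intro DERIV_diff[OF DERIV_diff[OF DERIV_const d1] Phi_deriv]) auto
    moreover have "0 - y - (- artanh y) > 0" using artanh_gt[of y] y x1 by simp
    ultimately show "\<exists>d. (psi has_real_derivative d) (at y) \<and> d > 0" by blast
  next
    show "continuous_on {0..x} psi" unfolding psi_def
      by (intro continuous_intros continuous_on_subset[OF cont_Phi]) (use x1 in auto)
  qed
  moreover have "psi 0 = 0" unfolding psi_def by (simp add: Hent_half)
  ultimately show ?thesis unfolding psi_def by simp
qed

lemma Hent_quad:
  fixes a :: real assumes "0 \<le> a" "a \<le> 1"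
  shows "Hent a \<le> ln 2 - (2*a - 1)^2 / 2"
    and "a \<noteq> 1/2 \<Longrightarrow> Hent a < ln 2 - (2*a - 1)^2 / 2"
proof -
  have st: "a \<noteq> 1/2 \<Longrightarrow> Hent a < ln 2 - (2*a - 1)^2 / 2"
  proof -
    assume "a \<noteq> 1/2"
    show ?thesis
    proof (cases "a > 1/2")
      case True
      have "Hent ((1 + (2*a - 1)) / 2) < ln 2 - (2*a - 1)^2 / 2"
        using True assms by (intro Phi_quad_pos) auto
      then show ?thesis by simp
    next
      case False
      then have "a < 1/2" using \<open>a \<noteq> 1/2\<close> by simp
      have e: "(1 + (1 - 2*a)) / 2 = 1 - a" by simp
      have e2: "(1 - 2*a)^2 = (2*a - 1)^2" by (simp add: power2_eq_square algebra_simps)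
      have "Hent (1 - a) < ln 2 - (2*a - 1)^2 / 2"
        using Phi_quad_pos[of "1 - 2*a"] \<open>a < 1/2\<close> assms unfolding e e2 by simp
      then show ?thesis by (simp add: Hent_sym)
    qed
  qed
  then show "a \<noteq> 1/2 \<Longrightarrow> Hent a < ln 2 - (2*a - 1)^2 / 2" .
  show "Hent a \<le> ln 2 - (2*a - 1)^2 / 2"
  proof (cases "a = 1/2")
    case True then show ?thesis unfolding True by (simp add: Hent_half)
  qed (use st in auto)
qed

lemma tanh_artanh:
  fixes y :: real assumes "-1 < y" "y < 1" shows "tanh (artanh y) = y"
proof -
  have p: "1 + y > 0" "1 - y > 0" using assms by auto
  have "- 2 * artanh y = ln (1 - y) - ln (1 + y)"
    using p by (simp add: artanh_def ln_div)
  then have "exp (- 2 * artanh y) = (1 - y) / (1 + y)"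
    using p by (simp add: exp_diff)
  then show ?thesis using p unfolding tanh_real_altdef
    by (simp only: mult_minus_left [symmetric]) (simp add: field_simps)
qed

lemma h_lim0:
  fixes c :: real assumes "c > 0"
  shows "((\<lambda>y. artanh y / tanh (c * y)) \<longlongrightarrow> inverse c) (at_right 0)"
  using assms unfolding tanh_real_altdef artanh_def by real_asymp

lemma sinh_cosh_ge: fixes u :: real assumes "0 \<le> u" shows "u \<le> sinh u * cosh u"
proof -
  have "(\<lambda>u. sinh u * cosh u - u) 0 \<le> (\<lambda>u. sinh u * cosh u - u) u"
  proof (rule DERIV_nonneg_imp_increasing_open[OF assms])
    fix x :: real
    have "((\<lambda>u. sinh u * cosh u - u) has_real_derivative (cosh x * cosh x + sinh x * sinh x - 1)) (at x)"
      by (auto intro!: derivative_eq_intros)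
    moreover have "cosh x * cosh x + sinh x * sinh x - 1 = 2 * sinh x ^ 2"
      using cosh_square_eq[of x] by (simp add: power2_eq_square)
    ultimately show "\<exists>y. ((\<lambda>u. sinh u * cosh u - u) has_real_derivative y) (at x) \<and> y \<ge> 0"
      by (intro exI[of _ "2 * sinh x ^ 2"]) auto
  next
    show "continuous_on {0..u} (\<lambda>u. sinh u * cosh u - u)" by (intro continuous_intros)
  qed
  then show ?thesis by simp
qed

lemma tanh_ge: fixes u :: real assumes "0 \<le> u" shows "u * (1 - tanh u ^ 2) \<le> tanh u"
proof -
  have ch: "cosh u > 0" by simp
  have "1 - tanh u ^ 2 = (cosh u ^ 2 - sinh u ^ 2) / cosh u ^ 2"
    using ch by (simp add: tanh_def power_divide field_simps)
  then have "1 - tanh u ^ 2 = 1 / cosh u ^ 2"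
    using cosh_square_eq[of u] by simp
  then have "u * (1 - tanh u ^ 2) = u / cosh u ^ 2" by simp
  also have "\<dots> \<le> sinh u * cosh u / cosh u ^ 2"
    using sinh_cosh_ge[OF assms] ch by (intro divide_right_mono) auto
  also have "\<dots> = tanh u" using ch by (simp add: tanh_def power2_eq_square)
  finally show ?thesis .
qed

lemma m_pos: fixes y :: real assumes "0 < y" "y < 1" shows "(1 - y^2) * artanh y < y"
proof -
  define m where "m = (\<lambda>y::real. y - (1 - y^2) * artanh y)"
  have "m 0 < m y"
  proof (rule DERIV_pos_imp_increasing_open[OF assms(1)])
    fix x :: real assume x: "0 < x" "x < y"
    then have x1: "x < 1" using assms by simp
    have "x^2 < 1" using x x1 by (simp add: power_less_one_iff abs_less_iff)
    then have ne: "1 - x^2 \<noteq> 0" by simp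
    have "(m has_real_derivative (1 - ((0 - 2 * x) * artanh x + (1 - x^2) * (1 / (1 - x^2))))) (at x)"
      unfolding m_def using x x1 by (auto intro!: derivative_eq_intros simp: power2_eq_square)
    moreover have "1 - ((0 - 2 * x) * artanh x + (1 - x^2) * (1 / (1 - x^2))) = 2 * x * artanh x"
      using ne by (simp add: field_simps)
    moreover have "2 * x * artanh x > 0" using artanh_gt[OF x(1) x1] x by simp
    ultimately show "\<exists>d. (m has_real_derivative d) (at x) \<and> d > 0" by (intro exI[of _ "2 * x * artanh x"]) auto
  next
    show "continuous_on {0..y} m" unfolding m_def using assms by (intro continuous_intros) auto
  qed
  then show ?thesis unfolding m_def by simp
qed

definition hfun :: "real \<Rightarrow> real \<Rightarrow> real" where
  "hfun c y = artanh y / tanh (c * y)"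

lemma tanh_sq_less: "tanh (x::real) ^ 2 < 1"
  using tanh_real_bounds[of x] by (simp add: abs_square_less_1 abs_if)

lemma hfun_mono:
  fixes c y1 y2 :: real assumes c: "c > 0" and y: "0 < y1" "y1 < y2" "y2 < 1"
  shows "hfun c y1 < hfun c y2"
proof -
  have "hfun c y1 < hfun c y2"
  proof (rule DERIV_pos_imp_increasing_open[OF y(2)])
    fix y :: real assume yy: "y1 < y" "y < y2"
    then have y0: "0 < y" "y < 1" using y by auto
    define T where "T = tanh (c * y)"
    define A where "A = artanh y"
    have T0: "T > 0" unfolding T_def using c y0 by simp
    have T1: "1 - T^2 > 0" using tanh_sq_less unfolding T_def by simp
    have ysq: "y^2 < 1" using y0 by (simp add: power_less_one_iff abs_less_iff)
    have dA: "(artanh has_real_derivative (1 / (1 - y^2))) (at y)" using y0 by (auto intro!: derivative_eq_intros)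
    have dT: "((\<lambda>y. tanh (c * y)) has_real_derivative ((1 - T^2) * c)) (at y)"
      unfolding T_def by (auto intro!: derivative_eq_intros)
    have d: "(hfun c has_real_derivative ((1 / (1 - y^2)) * T - A * ((1 - T^2) * c)) / (T * T)) (at y)"
      unfolding hfun_def[abs_def] A_def T_def using DERIV_divide[OF dA dT] T0 c y0 unfolding T_def by simp
    have mm: "(1 - y^2) * A < y" unfolding A_def using m_pos[OF y0] .
    have tg: "c * y * (1 - T^2) \<le> T" unfolding T_def using tanh_ge[of "c*y"] c y0 by simp
    have "A * ((1 - T^2) * c) < y / (1 - y^2) * ((1 - T^2) * c)"
    proof (rule mult_strict_right_mono)
      show "A < y / (1 - y^2)" using mm ysq by (simp add: field_simps)
      show "0 < (1 - T^2) * c" using T1 c by simp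
    qed
    also have "\<dots> = (c * y * (1 - T^2)) / (1 - y^2)" by (simp add: field_simps)
    also have "\<dots> \<le> T / (1 - y^2)" using tg ysq by (intro divide_right_mono) auto
    finally have "(1 / (1 - y^2)) * T - A * ((1 - T^2) * c) > 0" by simp
    then have "((1 / (1 - y^2)) * T - A * ((1 - T^2) * c)) / (T * T) > 0" using T0 by simp
    then show "\<exists>d. (hfun c has_real_derivative d) (at y) \<and> d > 0" using d by blast
  next
    show "continuous_on {y1..y2} (hfun c)" unfolding hfun_def[abs_def]
      using y c by (intro continuous_intros) auto
  qed
  then show ?thesis .
qed

lemma hfun_inj:
  fixes c :: real assumes "c > 0" "0 < y1" "y1 < 1" "0 < y2" "y2 < 1" "hfun c y1 = hfun c y2"
  shows "y1 = y2"
  using hfun_mono[of c y1 y2] hfun_mono[of c y2 y1] assms by (cases y1 y2 rule: linorder_cases) auto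

lemma hfun_exists:
  fixes c K :: real assumes c: "c > 0" and K: "K > 0" and cK: "K < c^2"
  shows "\<exists>y. 0 < y \<and> y < 1 \<and> hfun c y = c / K"
proof -
  have "inverse c < c / K" using c K cK by (simp add: field_simps power2_eq_square)
  then have "eventually (\<lambda>y. hfun c y < c / K) (at_right 0)"
    using order_tendstoD(2)[OF h_lim0[OF c]] unfolding hfun_def by simp
  then obtain b where b: "b > 0" "\<And>y. y > 0 \<Longrightarrow> y < b \<Longrightarrow> hfun c y < c / K"
    unfolding eventually_at_right_field by auto
  define y0 where "y0 = min (b/2) (1/2)"
  have y0: "0 < y0" "y0 < 1" "hfun c y0 < c / K" using b by (auto simp: y0_def)
  define y1 where "y1 = tanh (c / K + 1 + artanh y0)"
  have y1: "0 < y1" "y1 < 1" unfolding y1_def using c K y0 artanh_gt[OF y0(1,2)] tanh_real_lt_1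
    by (auto intro!: add_pos_pos divide_pos_pos)
  have ay1: "artanh y1 = c / K + 1 + artanh y0" unfolding y1_def by (simp add: artanh_tanh_real)
  have t1: "0 < tanh (c * y1)" "tanh (c * y1) \<le> 1" using c y1 tanh_real_lt_1[of "c*y1"] by auto
  have "artanh y0 > 0" using artanh_gt[OF y0(1,2)] y0 by simp
  then have "artanh y1 > c / K" using ay1 by simp
  moreover have "artanh y1 \<le> hfun c y1"
  proof -
    have "artanh y1 > 0" using \<open>artanh y0 > 0\<close> ay1 c K by (simp add: add_pos_pos)
    then have "artanh y1 * tanh (c * y1) \<le> artanh y1" using t1 by (simp add: mult_left_le)
    then show ?thesis unfolding hfun_def using t1 by (simp add: field_simps)
  qed
  ultimately have hy1: "hfun c y1 > c / K" by simp
  have "y0 < y1"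
  proof (rule ccontr)
    assume "\<not> y0 < y1"
    then have "y1 \<le> y0" by simp
    then have "hfun c y1 \<le> hfun c y0" using hfun_mono[OF c y1(1) _ y0(2)] by (cases "y1 = y0") auto
    then show False using hy1 y0 by simp
  qed
  have "\<exists>x. y0 \<le> x \<and> x \<le> y1 \<and> hfun c x = c / K"
  proof (rule IVT)
    show "hfun c y0 \<le> c / K" "c / K \<le> hfun c y1" using y0 hy1 by auto
    show "y0 \<le> y1" using \<open>y0 < y1\<close> by simp
    show "\<forall>x. y0 \<le> x \<and> x \<le> y1 \<longrightarrow> isCont (hfun c) x"
      unfolding hfun_def[abs_def] using y0 y1 c by (auto intro!: continuous_intros)
  qed
  then obtain x where "y0 \<le> x" "x \<le> y1" "hfun c x = c / K" by blast
  then show ?thesis using y0 y1 by (intro exI[of _ x]) auto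
qed

definition Gfun :: "real \<Rightarrow> real \<Rightarrow> real \<Rightarrow> real" where
  "Gfun c K y = ln (exp (c * y) + exp (- (c * y))) + K * Hent ((1 + y) / 2)"

lemma Gfun_sym: "Gfun c K (- y) = Gfun c K y"
proof -
  have "(1 + - y) / 2 = 1 - (1 + y) / 2" by (simp add: field_simps)
  then have e: "Hent ((1 + - y) / 2) = Hent ((1 + y) / 2)" by (simp only: Hent_sym)
  show ?thesis unfolding Gfun_def e by (simp add: add.commute)
qed

lemma Gfun_deriv:
  assumes "-1 < y" "y < 1"
  shows "(Gfun c K has_real_derivative (c * tanh (c * y) - K * artanh y)) (at y)"
proof -
  have pos: "exp (c * y) + exp (- (c * y)) > 0" by (simp add: add_pos_pos)
  have d1: "((\<lambda>y. exp (c * y) + exp (- (c * y))) has_real_derivative (exp (c * y) * c - exp (- (c * y)) * c)) (at y)"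
    by (auto intro!: derivative_eq_intros)
  have d2: "((\<lambda>y. ln (exp (c * y) + exp (- (c * y)))) has_real_derivative
      inverse (exp (c * y) + exp (- (c * y))) * (exp (c * y) * c - exp (- (c * y)) * c)) (at y)"
    by (rule DERIV_chain2[OF DERIV_ln[OF pos] d1])
  have e: "inverse (exp (c * y) + exp (- (c * y))) * (exp (c * y) * c - exp (- (c * y)) * c) = c * tanh (c * y)"
    unfolding tanh_exp using pos by (simp add: field_simps)
  have d3: "((\<lambda>y. K * Hent ((1 + y) / 2)) has_real_derivative K * (- artanh y)) (at y)"
    by (rule DERIV_cmult[OF Phi_deriv[OF assms]])
  show ?thesis unfolding Gfun_def[abs_def] using DERIV_add[OF d2 d3] e by simp
qed

lemma Gfun_cont: "continuous_on {-1..1} (Gfun c K)"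
proof -
  have "\<And>x. exp (c * x) + exp (- (c * x)) > 0" by (simp add: add_pos_pos)
  then show ?thesis unfolding Gfun_def[abs_def]
    by (intro continuous_intros continuous_on_subset[OF cont_Phi]) (auto simp: less_le)
qed

lemma Gfun_max_pos:
  fixes c K ys y :: real
  assumes c: "c > 0" and K: "K > 0" and ys: "0 < ys" "ys < 1" "hfun c ys = c / K"
    and y: "0 \<le> y" "y \<le> 1" "y \<noteq> ys"
  shows "Gfun c K y < Gfun c K ys"
proof (cases "y < ys")
  case True
  show ?thesis
  proof (rule DERIV_pos_imp_increasing_open[OF True])
    fix z assume z: "y < z" "z < ys"
    then have z0: "0 < z" "z < 1" using y ys by auto
    have "hfun c z < hfun c ys" using hfun_mono[OF c z0(1) z(2) ys(2)] .
    then have "artanh z / tanh (c * z) < c / K" using ys unfolding hfun_def by simp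
    moreover have "tanh (c * z) > 0" using c z0 by simp
    ultimately have "artanh z < c / K * tanh (c * z)" by (simp add: divide_less_eq)
    then have "K * artanh z < c * tanh (c * z)" using K by (simp add: field_simps)
    then show "\<exists>d. (Gfun c K has_real_derivative d) (at z) \<and> d > 0"
      using Gfun_deriv[of z c K] z0 by (intro exI[of _ "c * tanh (c * z) - K * artanh z"]) auto
  next
    show "continuous_on {y..ys} (Gfun c K)"
      by (rule continuous_on_subset[OF Gfun_cont]) (use y ys in auto)
  qed
next
  case False
  then have yl: "ys < y" using y by simp
  show ?thesis
  proof (rule DERIV_neg_imp_decreasing_open[OF yl])
    fix z assume z: "ys < z" "z < y"
    then have z0: "0 < z" "z < 1" using y ys by auto
    have "hfun c ys < hfun c z" using hfun_mono[OF c ys(1) z(1) z0(2)] .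
    then have "c / K < artanh z / tanh (c * z)" using ys unfolding hfun_def by simp
    moreover have "tanh (c * z) > 0" using c z0 by simp
    ultimately have "c / K * tanh (c * z) < artanh z" by (simp add: less_divide_eq)
    then have "c * tanh (c * z) < K * artanh z" using K by (simp add: field_simps)
    then show "\<exists>d. (Gfun c K has_real_derivative d) (at z) \<and> d < 0"
      using Gfun_deriv[of z c K] z0 by (intro exI[of _ "c * tanh (c * z) - K * artanh z"]) auto
  next
    show "continuous_on {ys..y} (Gfun c K)"
      by (rule continuous_on_subset[OF Gfun_cont]) (use y ys in auto)
  qed
qed

lemma Gfun_max:
  fixes c K ys y :: real
  assumes c: "c > 0" and K: "K > 0" and ys: "0 < ys" "ys < 1" "hfun c ys = c / K"
    and y: "-1 \<le> y" "y \<le> 1"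
  shows "Gfun c K y \<le> Gfun c K ys" and "y \<noteq> ys \<Longrightarrow> y \<noteq> - ys \<Longrightarrow> Gfun c K y < Gfun c K ys"
proof -
  have st: "y \<noteq> ys \<Longrightarrow> y \<noteq> - ys \<Longrightarrow> Gfun c K y < Gfun c K ys"
  proof (cases "y \<ge> 0")
    case True
    assume "y \<noteq> ys" then show ?thesis using Gfun_max_pos[OF c K ys] True y by auto
  next
    case False
    assume "y \<noteq> - ys"
    then have "- y \<noteq> ys" by auto
    then have "Gfun c K (- y) < Gfun c K ys" using Gfun_max_pos[OF c K ys, of "-y"] False y by auto
    then show ?thesis by (simp add: Gfun_sym)
  qed
  then show "y \<noteq> ys \<Longrightarrow> y \<noteq> - ys \<Longrightarrow> Gfun c K y < Gfun c K ys" .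
  show "Gfun c K y \<le> Gfun c K ys"
  proof (cases "y = ys \<or> y = - ys")
    case True
    then show ?thesis
    proof
      assume "y = - ys" then show ?thesis by (simp add: Gfun_sym)
    qed simp
  qed (use st in auto)
qed

definition Ffun :: "real \<Rightarrow> real \<Rightarrow> real \<times> real \<Rightarrow> real" where
  "Ffun c K q = Hent (fst q) + K * Hent (snd q) + c * (2 * fst q - 1) * (2 * snd q - 1)"

definition Dom :: "real \<Rightarrow> (real \<times> real) set" where
  "Dom K = {q. 0 \<le> fst q \<and> fst q \<le> 1 \<and> 0 \<le> snd q \<and> snd q \<le> 1 \<and> (1 + K) / 2 \<le> fst q + K * snd q}"

lemma conj_eq:
  fixes t :: real
  shows "Hent ((1 + tanh t) / 2) + t * (2 * ((1 + tanh t) / 2) - 1) = ln (exp t + exp (-t))"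
proof -
  define S where "S = exp t + exp (-t)"
  have S: "S > 0" unfolding S_def by (simp add: add_pos_pos)
  have a: "(1 + tanh t) / 2 = exp t / S" unfolding tanh_exp S_def[symmetric] using S
    by (simp add: field_simps S_def)
  have b: "1 - exp t / S = exp (-t) / S" using S by (simp add: field_simps S_def)
  have l1: "ln (exp t / S) = t - ln S" using S by (simp add: ln_div)
  have l2: "ln (exp (-t) / S) = - t - ln S" using S by (simp add: ln_div)
  have "Hent (exp t / S) + t * (2 * (exp t / S) - 1) = ln S"
    unfolding Hent_def b l1 l2
  proof -
    have "exp t / S + exp (-t) / S = 1" using S by (simp add: S_def add_divide_distrib[symmetric])
    then have v: "exp (-t) / S = 1 - exp t / S" by simp
    show "- (exp t / S * (t - ln S)) - exp (- t) / S * (- t - ln S) + t * (2 * (exp t / S) - 1) = ln S"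
      unfolding v by (simp add: algebra_simps diff_divide_distrib add_divide_distrib)
  qed
  then show ?thesis unfolding a S_def .
qed

lemma Fmax_small:
  fixes c K :: real and q :: "real \<times> real"
  assumes K: "K > 0" and c: "c \<ge> 0" "c \<le> sqrt K"
    and q: "0 \<le> fst q" "fst q \<le> 1" "0 \<le> snd q" "snd q \<le> 1" "q \<noteq> (1/2, 1/2)"
  shows "Ffun c K q < Ffun c K (1/2, 1/2)"
proof -
  obtain a b where qab: "q = (a, b)" by (cases q)
  have ab: "0 \<le> a" "a \<le> 1" "0 \<le> b" "b \<le> 1" "a \<noteq> 1/2 \<or> b \<noteq> 1/2" using q qab by auto
  define x where "x = 2*a - 1"
  define y where "y = 2*b - 1"
  have h1: "Hent a \<le> ln 2 - x^2/2" unfolding x_def using Hent_quad(1)[OF ab(1,2)] .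
  have h2: "Hent b \<le> ln 2 - y^2/2" unfolding y_def using Hent_quad(1)[OF ab(3,4)] .
  have hs: "Hent a + K * Hent b < ln 2 - x^2/2 + K * (ln 2 - y^2/2)"
  proof (cases "a \<noteq> 1/2")
    case True
    then have "Hent a < ln 2 - x^2/2" unfolding x_def using Hent_quad(2)[OF ab(1,2)] by simp
    moreover have "K * Hent b \<le> K * (ln 2 - y^2/2)" using h2 K by simp
    ultimately show ?thesis by simp
  next
    case False
    then have "b \<noteq> 1/2" using ab by simp
    then have "Hent b < ln 2 - y^2/2" unfolding y_def using Hent_quad(2)[OF ab(3,4)] by simp
    then have "K * Hent b < K * (ln 2 - y^2/2)" using K by simp
    with h1 show ?thesis by simp
  qed
  have cxy: "c * x * y \<le> (x^2 + K * y^2) / 2"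
  proof -
    have "c * x * y \<le> c * (\<bar>x\<bar> * \<bar>y\<bar>)"
      using c by (metis abs_ge_self abs_mult mult.assoc mult_left_mono)
    also have "\<dots> \<le> sqrt K * (\<bar>x\<bar> * \<bar>y\<bar>)" using c by (simp add: mult_right_mono)
    also have "\<dots> \<le> (x^2 + K * y^2) / 2"
    proof -
      have "0 \<le> (\<bar>x\<bar> - sqrt K * \<bar>y\<bar>)^2" by simp
      also have "\<dots> = x^2 + K * y^2 - 2 * (sqrt K * (\<bar>x\<bar> * \<bar>y\<bar>))"
        using K by (simp add: power2_eq_square algebra_simps)
      finally show ?thesis by simp
    qed
    finally show ?thesis .
  qed
  have "Ffun c K q = Hent a + K * Hent b + c * x * y" unfolding Ffun_def qab x_def y_def by simp
  also have "\<dots> < ln 2 - x^2/2 + K * (ln 2 - y^2/2) + (x^2 + K * y^2) / 2" using hs cxy by linarith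
  also have "\<dots> = (1 + K) * ln 2" by (simp add: algebra_simps)
  also have "\<dots> = Ffun c K (1/2, 1/2)" unfolding Ffun_def by (simp add: Hent_half algebra_simps)
  finally show ?thesis .
qed

lemma Fmax_large:
  fixes c K ys :: real and q :: "real \<times> real"
  assumes c: "c > 0" and K: "K > 0" and ys: "0 < ys" "ys < 1" "hfun c ys = c / K"
    and q: "q \<in> Dom K" "q \<noteq> ((1 + tanh (c * ys)) / 2, (1 + ys) / 2)"
  shows "Ffun c K q < Ffun c K ((1 + tanh (c * ys)) / 2, (1 + ys) / 2)"
proof -
  obtain a b where qab: "q = (a, b)" by (cases q)
  have ab: "0 \<le> a" "a \<le> 1" "0 \<le> b" "b \<le> 1" "(1 + K) / 2 \<le> a + K * b"
    using q qab by (auto simp: Dom_def)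
  define y where "y = 2*b - 1"
  have hb: "b = (1 + y) / 2" unfolding y_def by simp
  have y1: "-1 \<le> y" "y \<le> 1" using ab unfolding y_def by auto
  have Fq: "Ffun c K q = (Hent a + (c * y) * (2 * a - 1)) + K * Hent ((1 + y) / 2)"
    unfolding Ffun_def qab y_def by (simp add: algebra_simps)
  have Fp: "Ffun c K ((1 + tanh (c * ys)) / 2, (1 + ys) / 2) = Gfun c K ys"
  proof -
    have e1: "2 * ((1 + tanh (c * ys)) / 2) - 1 = tanh (c * ys)" and e2: "2 * ((1 + ys) / 2) - 1 = ys" by (simp_all add: field_simps)
    have "Ffun c K ((1 + tanh (c * ys)) / 2, (1 + ys) / 2) =
      (Hent ((1 + tanh (c * ys)) / 2) + (c * ys) * (2 * ((1 + tanh (c * ys)) / 2) - 1)) + K * Hent ((1 + ys) / 2)"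
      unfolding Ffun_def fst_conv snd_conv e1 e2 by (simp add: algebra_simps)
    also have "\<dots> = Gfun c K ys" unfolding conj_eq Gfun_def ..
    finally show ?thesis .
  qed
  have le1: "Hent a + (c * y) * (2 * a - 1) \<le> ln (exp (c * y) + exp (- (c * y)))"
    using conj_ineq(1)[OF ab(1,2)] .
  have FG: "Ffun c K q \<le> Gfun c K y" unfolding Fq Gfun_def using le1 by simp
  have GG: "Gfun c K y \<le> Gfun c K ys" using Gfun_max(1)[OF c K ys y1] .
  show ?thesis
  proof (cases "y = ys \<or> y = - ys")
    case False
    then have "Gfun c K y < Gfun c K ys" using Gfun_max(2)[OF c K ys y1] by auto
    then show ?thesis using FG Fp by simp
  next
    case True
    have strictF: "2 * a - 1 \<noteq> tanh (c * y) \<Longrightarrow> Ffun c K q < Gfun c K y"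
      unfolding Fq Gfun_def using conj_ineq(2)[OF ab(1,2), of "c * y"] by simp
    have ne: "2 * a - 1 \<noteq> tanh (c * y)"
    proof
      assume eq: "2 * a - 1 = tanh (c * y)"
      from True show False
      proof
        assume "y = ys"
        then have "q = ((1 + tanh (c * ys)) / 2, (1 + ys) / 2)" using eq qab y_def by (auto simp: field_simps)
        then show False using q by simp
      next
        assume yy: "y = - ys"
        then have "2 * a - 1 = - tanh (c * ys)" using eq by simp
        moreover have "tanh (c * ys) > 0" using c ys by simp
        ultimately have "a < 1/2" by linarith
        moreover have "b < 1/2" using yy ys y_def by simp
        moreover have "K * b < K * (1/2)" using \<open>b < 1/2\<close> K by (rule mult_strict_left_mono)
        moreover have "(1 + K) / 2 = 1/2 + K * (1/2)" by simp
        ultimately have "a + K * b < (1 + K) / 2" by linarith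
        then show False using ab by simp
      qed
    qed
    show ?thesis using strictF[OF ne] GG Fp by simp
  qed
qed

lemma pow_exp_ln: "(x::real) > 0 \<Longrightarrow> x ^ m = exp (real m * ln x)"
  by (simp add: ln_realpow[symmetric])

lemma exp_cancel2: "exp (- x - y) * (exp x * exp y) = (1::real)"
proof -
  have "exp ((- x - y) + (x + y)) = exp (- x - y) * (exp x * exp y)" by (simp only: exp_add)
  then show ?thesis by simp
qed

lemma entropy_exp:
  fixes n i :: nat assumes "0 < i" "i < n"
  shows "exp (real n * Hent (real i / real n)) * ((real i / real n) ^ i * (1 - real i / real n) ^ (n - i)) = 1"
proof -
  define p where "p = real i / real n"
  have p: "0 < p" "p < 1" using assms by (auto simp: p_def)
  have "real n * Hent p = - (real i * ln p) - real (n - i) * ln (1 - p)"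
    unfolding Hent_def using assms by (simp add: p_def of_nat_diff algebra_simps)
  then have "exp (real n * Hent p) * (p ^ i * (1 - p) ^ (n - i)) =
        exp (- (real i * ln p) - real (n - i) * ln (1 - p)) * (exp (real i * ln p) * exp (real (n - i) * ln (1 - p)))"
    using p by (simp add: pow_exp_ln)
  also have "\<dots> = 1" by (rule exp_cancel2)
  finally show ?thesis unfolding p_def .
qed

lemma binom_upper:
  fixes n i :: nat assumes "i \<le> n"
  shows "real (n choose i) \<le> exp (real n * Hent (real i / real n))"
proof (cases "0 < i \<and> i < n")
  case False
  then have "i = 0 \<or> i = n" using assms by auto
  then show ?thesis
  proof
    assume "i = n" then show ?thesis by (cases "n = 0") auto
  qed auto
next
  case True
  define p where "p = real i / real n"
  have p: "0 < p" "p < 1" using True by (auto simp: p_def)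
  have "real (n choose i) * (p ^ i * (1 - p) ^ (n - i)) \<le> (\<Sum>k\<le>n. real (n choose k) * p ^ k * (1 - p) ^ (n - k))"
    using assms p by (subst mult.assoc[symmetric]) (intro member_le_sum, auto)
  also have "\<dots> = (p + (1 - p)) ^ n" by (rule binomial_ring[symmetric])
  also have "\<dots> = 1" by simp
  finally have le: "real (n choose i) * (p ^ i * (1 - p) ^ (n - i)) \<le> 1" .
  have E: "exp (real n * Hent p) * (p ^ i * (1 - p) ^ (n - i)) = 1" unfolding p_def using entropy_exp[OF True[THEN conjunct1] True[THEN conjunct2]] .
  have pos: "p ^ i * (1 - p) ^ (n - i) > 0" using p by simp
  from le E pos show ?thesis unfolding p_def[symmetric]
    by (metis mult_le_cancel_right_pos mult_le_cancel_right)
qed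

lemma binom_Suc_rel: "Suc j * (n choose Suc j) = (n - j) * (n choose j)"
  by (metis binomial_absorb_comp binomial_absorption mult.commute)

lemma binom_lower:
  fixes n i :: nat assumes i: "0 < i" "i < n"
  shows "exp (real n * Hent (real i / real n)) / (real n + 1) \<le> real (n choose i)"
proof -
  define p where "p = real i / real n"
  have p: "0 < p" "p < 1" using i by (auto simp: p_def)
  define t where "t = (\<lambda>j. real (n choose j) * p ^ j * (1 - p) ^ (n - j))"
  have rec: "t (Suc j) * (real (Suc j) * (1 - p)) = t j * (real (n - j) * p)" if "j < n" for j
  proof -
    have B: "(1 - p) ^ (n - Suc j) * (1 - p) = (1 - p) ^ (n - j)"
      using that by (metis Suc_diff_Suc power_Suc2)
    have A: "real (n choose Suc j) * real (Suc j) = real (n - j) * real (n choose j)"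
      using binom_Suc_rel[of j n] by (metis of_nat_mult mult.commute)
    have "t (Suc j) * (real (Suc j) * (1 - p)) =
        (real (n choose Suc j) * real (Suc j)) * (p * p ^ j) * ((1 - p) ^ (n - Suc j) * (1 - p))"
      unfolding t_def by (simp add: algebra_simps)
    also have "\<dots> = real (n - j) * real (n choose j) * (p * p ^ j) * (1 - p) ^ (n - j)"
      unfolding A B ..
    also have "\<dots> = t j * (real (n - j) * p)" unfolding t_def by (simp add: algebra_simps)
    finally show ?thesis .
  qed
  have conv: "real (Suc j) * (1 - p) - real (n - j) * p
      = (real (Suc j) * real (n - i) - real (n - j) * real i) / real n" if "j < n" for j
  proof -
    have "1 - p = real (n - i) / real n" using i by (simp add: p_def of_nat_diff field_simps)
    then show ?thesis unfolding p_def by (simp add: diff_divide_distrib)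
  qed
  have key: "real (n - j) * real i - real (Suc j) * real (n - i) = real n * (real i - real j - 1) + real i"
    if "j < n" for j using that i by (simp add: of_nat_diff algebra_simps)
  have up: "t j \<le> t (Suc j)" if "j < i" for j
  proof -
    have jn: "j < n" using that i by simp
    have "Suc j \<le> i" using that by simp
    then have "real (Suc j) \<le> real i" by (simp only: of_nat_le_iff)
    then have "real i - real j - 1 \<ge> 0" by simp
    then have "real n * (real i - real j - 1) \<ge> 0" by simp
    then have "real (n - j) * real i - real (Suc j) * real (n - i) \<ge> 0"
      using key[OF jn] by simp
    then have "(real (Suc j) * real (n - i) - real (n - j) * real i) / real n \<le> 0"
      by (simp add: divide_nonpos_nonneg)
    then have "real (Suc j) * (1 - p) \<le> real (n - j) * p"
      using conv[OF jn] by simp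
    moreover have "t j \<ge> 0" using p by (simp add: t_def)
    ultimately have "t (Suc j) * (real (Suc j) * (1 - p)) \<ge> t j * (real (Suc j) * (1 - p))"
      using rec[OF jn] by (simp add: mult_left_mono)
    moreover have "real (Suc j) * (1 - p) > 0" using p by simp
    ultimately show ?thesis by (rule mult_right_le_imp_le)
  qed
  have down: "t (Suc j) \<le> t j" if "i \<le> j" "j < n" for j
  proof -
    have "real i \<le> real j" using that by simp
    then have "real i - real j - 1 \<le> -1" by simp
    then have "real n * (real i - real j - 1) \<le> real n * (-1)" by (intro mult_left_mono) auto
    moreover have "real i < real n" using i by simp
    ultimately have "real (n - j) * real i - real (Suc j) * real (n - i) \<le> 0"
      using key[OF that(2)] by simp
    then have "(real (Suc j) * real (n - i) - real (n - j) * real i) / real n \<ge> 0"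
      by simp
    then have "real (n - j) * p \<le> real (Suc j) * (1 - p)"
      using conv[OF that(2)] by simp
    moreover have "t j \<ge> 0" using p by (simp add: t_def)
    ultimately have "t j * (real (n - j) * p) \<le> t j * (real (Suc j) * (1 - p))"
      by (simp add: mult_left_mono)
    then have "t (Suc j) * (real (Suc j) * (1 - p)) \<le> t j * (real (Suc j) * (1 - p))"
      using rec[OF that(2)] by simp
    moreover have "real (Suc j) * (1 - p) > 0" using p by simp
    ultimately show ?thesis by (rule mult_right_le_imp_le)
  qed
  have max1: "t j \<le> t i" if "j \<le> i" for j
    using that
  proof (induction j rule: inc_induct)
    case base then show ?case by simp
  next
    case (step m) then show ?case using up[of m] by simp
  qed
  have max2: "t j \<le> t i" if "i \<le> j" "j \<le> n" for j
    using that
  proof (induction j rule: dec_induct)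
    case base then show ?case by simp
  next
    case (step m) then show ?case using down[of m] by simp
  qed
  have "1 = (p + (1 - p)) ^ n" by simp
  also have "\<dots> = (\<Sum>j\<le>n. t j)" unfolding t_def by (rule binomial_ring)
  also have "\<dots> \<le> (\<Sum>j\<le>n. t i)"
  proof (intro sum_mono)
    fix j assume "j \<in> {..n}"
    then show "t j \<le> t i" using max1[of j] max2[of j] by (cases "j \<le> i") auto
  qed
  also have "\<dots> = (real n + 1) * t i" by simp
  finally have tl: "1 \<le> (real n + 1) * t i" .
  have E: "exp (real n * Hent p) * (p ^ i * (1 - p) ^ (n - i)) = 1" unfolding p_def using entropy_exp[OF i] .
  have ti: "t i = real (n choose i) * (p ^ i * (1 - p) ^ (n - i))" by (simp add: t_def)
  have pos: "p ^ i * (1 - p) ^ (n - i) > 0" using p by simp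
  have "exp (real n * Hent p) = 1 / (p ^ i * (1 - p) ^ (n - i))" 
    using eq_divide_imp[OF _ E] pos by (metis less_irrefl)
  also have "\<dots> \<le> (real n + 1) * real (n choose i)"
    using tl pos unfolding ti by (simp add: field_simps)
  finally show ?thesis unfolding p_def[symmetric] by (simp add: field_simps)
qed

lemma count_T:
  fixes L R :: "'v set" and s :: int
  assumes fin: "finite L" "finite R" and disj: "L \<inter> R = {}" and s: "s \<in> {-1, 1}"
  shows "card {\<sigma> \<in> PiE (L \<union> R) (\<lambda>_. {-1, 1::int}). card {v \<in> L. \<sigma> v = s} = i \<and> card {v \<in> R. \<sigma> v = s} = j}
         = (card L choose i) * (card R choose j)"
proof -
  define T where "T = {\<sigma> \<in> PiE (L \<union> R) (\<lambda>_. {-1, 1::int}). card {v \<in> L. \<sigma> v = s} = i \<and> card {v \<in> R. \<sigma> v = s} = j}"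
  define P where "P = {A. A \<subseteq> L \<and> card A = i} \<times> {C. C \<subseteq> R \<and> card C = j}"
  define f where "f = (\<lambda>\<sigma>::'v \<Rightarrow> int. ({v \<in> L. \<sigma> v = s}, {v \<in> R. \<sigma> v = s}))"
  have ns: "- s \<noteq> s" using s by auto
  have ms: "- s \<in> {-1, 1::int}" using s by auto
  have inj: "inj_on f T"
  proof (rule inj_onI)
    fix \<sigma>1 \<sigma>2 assume a: "\<sigma>1 \<in> T" "\<sigma>2 \<in> T" "f \<sigma>1 = f \<sigma>2"
    show "\<sigma>1 = \<sigma>2"
    proof (rule PiE_ext)
      show "\<sigma>1 \<in> PiE (L \<union> R) (\<lambda>_. {-1, 1::int})" "\<sigma>2 \<in> PiE (L \<union> R) (\<lambda>_. {-1, 1::int})"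
        using a by (auto simp: T_def)
      fix v assume v: "v \<in> L \<union> R"
      have vals: "\<sigma>1 v \<in> {-1, 1}" "\<sigma>2 v \<in> {-1, 1}" using a v by (auto simp: T_def PiE_iff)
      have "\<sigma>1 v = s \<longleftrightarrow> \<sigma>2 v = s"
      proof (cases "v \<in> L")
        case True
        have "{v \<in> L. \<sigma>1 v = s} = {v \<in> L. \<sigma>2 v = s}" using a(3) by (simp add: f_def)
        then show ?thesis using True by blast
      next
        case False
        then have "v \<in> R" using v by simp
        have "{v \<in> R. \<sigma>1 v = s} = {v \<in> R. \<sigma>2 v = s}" using a(3) by (simp add: f_def)
        then show ?thesis using \<open>v \<in> R\<close> by blast
      qed
      then show "\<sigma>1 v = \<sigma>2 v" using vals s by auto
    qed
  qed
  have img: "f ` T = P"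
  proof
    show "f ` T \<subseteq> P" unfolding T_def P_def f_def by auto
    show "P \<subseteq> f ` T"
    proof
      fix AC assume "AC \<in> P"
      then obtain A C where AC: "AC = (A, C)" "A \<subseteq> L" "card A = i" "C \<subseteq> R" "card C = j"
        unfolding P_def by auto
      define \<sigma> where "\<sigma> = restrict (\<lambda>v. if v \<in> A \<union> C then s else - s) (L \<union> R)"
      have \<sigma>P: "\<sigma> \<in> PiE (L \<union> R) (\<lambda>_. {-1, 1::int})" unfolding \<sigma>_def using s ms by auto
      have eA: "{v \<in> L. \<sigma> v = s} = A" using AC(2,4) disj ns unfolding \<sigma>_def by auto
      have eC: "{v \<in> R. \<sigma> v = s} = C" using AC(2,4) disj ns unfolding \<sigma>_def by auto
      have "\<sigma> \<in> T" unfolding T_def using \<sigma>P eA eC AC by simp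
      moreover have "f \<sigma> = AC" unfolding f_def eA eC AC by simp
      ultimately show "AC \<in> f ` T" by blast
    qed
  qed
  have "card T = card P" using inj img by (metis card_image)
  also have "\<dots> = (card L choose i) * (card R choose j)"
    unfolding P_def using fin by (simp add: card_cartesian_product n_subsets)
  finally show ?thesis unfolding T_def .
qed

lemma sum_spins:
  fixes L :: "'v set" and \<sigma> :: "'v \<Rightarrow> int" and s :: int
  assumes fin: "finite L" and vals: "\<And>v. v \<in> L \<Longrightarrow> \<sigma> v \<in> {-1, 1}" and s: "s \<in> {-1, 1}"
  shows "(\<Sum>u\<in>L. real_of_int (\<sigma> u)) = real_of_int s * (2 * real (card {u \<in> L. \<sigma> u = s}) - real (card L))"
proof -
  have "(\<Sum>u\<in>L. real_of_int (\<sigma> u)) = (\<Sum>u\<in>L. if \<sigma> u = s then real_of_int s else - real_of_int s)"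
  proof (rule sum.cong[OF refl])
    fix u assume "u \<in> L"
    then have "\<sigma> u \<in> {-1, 1}" by (rule vals)
    then show "real_of_int (\<sigma> u) = (if \<sigma> u = s then real_of_int s else - real_of_int s)" using s by auto
  qed
  also have "\<dots> = (\<Sum>u\<in>{u \<in> L. \<sigma> u = s}. real_of_int s) + (\<Sum>u\<in>{u \<in> L. \<sigma> u \<noteq> s}. - real_of_int s)"
    using fin by (simp add: sum.If_cases Collect_conj_eq Int_commute Compl_eq set_diff_eq)
  also have "\<dots> = real (card {u \<in> L. \<sigma> u = s}) * real_of_int s - real (card {u \<in> L. \<sigma> u \<noteq> s}) * real_of_int s"
    by simp
  also have "card {u \<in> L. \<sigma> u \<noteq> s} = card L - card {u \<in> L. \<sigma> u = s}"
  proof -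
    have "{u \<in> L. \<sigma> u \<noteq> s} = L - {u \<in> L. \<sigma> u = s}" by auto
    then show ?thesis using fin by (simp add: card_Diff_subset)
  qed
  also have "real (card L - card {u \<in> L. \<sigma> u = s}) = real (card L) - real (card {u \<in> L. \<sigma> u = s})"
    using fin by (intro of_nat_diff card_mono) auto
  finally show ?thesis by (simp add: algebra_simps)
qed

lemma weight_prod:
  fixes L R :: "'v set" and \<beta> :: real
  assumes "finite L" "finite R"
  shows "ising_weight (L \<times> R) (\<lambda>_ _. \<beta>) \<sigma> =
         exp (\<beta> * (\<Sum>u\<in>L. real_of_int (\<sigma> u)) * (\<Sum>v\<in>R. real_of_int (\<sigma> v)))"
proof -
  have "(\<Sum>(u, v)\<in>L \<times> R. \<beta> * real_of_int (\<sigma> u) * real_of_int (\<sigma> v))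
      = (\<Sum>u\<in>L. \<Sum>v\<in>R. \<beta> * real_of_int (\<sigma> u) * real_of_int (\<sigma> v))"
    by (rule sum.cartesian_product[symmetric])
  also have "\<dots> = (\<Sum>u\<in>L. \<Sum>v\<in>R. \<beta> * (real_of_int (\<sigma> u) * real_of_int (\<sigma> v)))"
    by (simp add: mult.assoc)
  also have "\<dots> = \<beta> * (\<Sum>u\<in>L. \<Sum>v\<in>R. real_of_int (\<sigma> u) * real_of_int (\<sigma> v))"
    by (simp add: sum_distrib_left)
  also have "\<dots> = \<beta> * ((\<Sum>u\<in>L. real_of_int (\<sigma> u)) * (\<Sum>v\<in>R. real_of_int (\<sigma> v)))"
    by (simp add: sum_product)
  finally show ?thesis unfolding ising_weight_def by (simp add: mult.assoc)
qed

lemma card_split: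
  fixes L R :: "'v set" assumes "finite L" "finite R" "L \<inter> R = {}"
  shows "card {v \<in> L \<union> R. P v} = card {v \<in> L. P v} + card {v \<in> R. P v}"
proof -
  have "{v \<in> L \<union> R. P v} = {v \<in> L. P v} \<union> {v \<in> R. P v}" by auto
  then show ?thesis using assms by (simp add: card_Un_disjoint disjoint_iff)
qed

lemma majority_facts:
  fixes L R :: "'v set" and \<sigma> :: "'v \<Rightarrow> int"
  assumes fin: "finite L" "finite R" and disj: "L \<inter> R = {}" and \<sigma>: "\<sigma> \<in> spin_configs (L \<union> R)"
  shows "majority_spin L R \<sigma> \<in> {-1, 1}"
    and "card L + card R \<le> 2 * (card {v \<in> L. \<sigma> v = majority_spin L R \<sigma>} + card {v \<in> R. \<sigma> v = majority_spin L R \<sigma>})"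
proof -
  show "majority_spin L R \<sigma> \<in> {-1, 1}" unfolding majority_spin_def by auto
  have vals: "\<And>v. v \<in> L \<union> R \<Longrightarrow> \<sigma> v \<in> {-1, 1}" using \<sigma> by (auto simp: spin_configs_def PiE_iff)
  have cLR: "card (L \<union> R) = card L + card R" using fin disj by (simp add: card_Un_disjoint)
  show "card L + card R \<le> 2 * (card {v \<in> L. \<sigma> v = majority_spin L R \<sigma>} + card {v \<in> R. \<sigma> v = majority_spin L R \<sigma>})"
  proof (cases "2 * card {v \<in> L \<union> R. \<sigma> v = 1} \<ge> card L + card R")
    case True
    then have "majority_spin L R \<sigma> = 1" unfolding majority_spin_def by simp
    then show ?thesis using True card_split[OF fin disj, of "\<lambda>v. \<sigma> v = 1"] by simp
  next
    case False
    then have m: "majority_spin L R \<sigma> = -1" unfolding majority_spin_def by simp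
    have "{v \<in> L \<union> R. \<sigma> v = -1} = (L \<union> R) - {v \<in> L \<union> R. \<sigma> v = 1}" using vals by auto
    then have "card {v \<in> L \<union> R. \<sigma> v = -1} = card (L \<union> R) - card {v \<in> L \<union> R. \<sigma> v = 1}"
      by (simp only:) (rule card_Diff_subset, use fin in auto)
    moreover have "card {v \<in> L \<union> R. \<sigma> v = 1} \<le> card (L \<union> R)" using fin by (intro card_mono) auto
    ultimately have "card L + card R \<le> 2 * card {v \<in> L \<union> R. \<sigma> v = -1}" using False cLR by linarith
    then show ?thesis using m card_split[OF fin disj, of "\<lambda>v. \<sigma> v = -1"] by simp
  qed
qed

locale bip =
  fixes L R :: "'v set" and n m :: nat and \<beta> :: real
  assumes finL: "finite L" and finR: "finite R" and disj: "L \<inter> R = {}"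
    and cL: "card L = n" and cR: "card R = m" and n0: "n > 0" and m0: "m > 0"
begin

definition "conf = spin_configs (L \<union> R)"
definition "Zb = ising_Z (L \<union> R) (L \<times> R) (\<lambda>_ _. \<beta>)"
definition "Pb q = phase_prob L R (L \<times> R) (\<lambda>_ _. \<beta>) q"
definition "Sq q = {\<sigma> \<in> conf. phase L R \<sigma> = q}"
definition "Wq q = exp (real n * (\<beta> * real m) * (2 * fst q - 1) * (2 * snd q - 1))"
definition "Tb s i j = {\<sigma> \<in> conf. card {v \<in> L. \<sigma> v = s} = i \<and> card {v \<in> R. \<sigma> v = s} = j}"

lemma fin_conf: "finite conf"
  unfolding conf_def spin_configs_def using finL finR by (intro finite_PiE) auto

lemma Zpos: "Zb > 0"
proof -
  have "restrict (\<lambda>_. 1) (L \<union> R) \<in> conf" unfolding conf_def spin_configs_def by auto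
  then have "conf \<noteq> {}" by blast
  then show ?thesis unfolding Zb_def ising_Z_def conf_def[symmetric]
    using fin_conf by (intro sum_pos) (auto simp: ising_weight_def)
qed

lemma PZ: "Pb q * Zb = (\<Sum>\<sigma>\<in>Sq q. ising_weight (L \<times> R) (\<lambda>_ _. \<beta>) \<sigma>)"
  using Zpos unfolding Pb_def phase_prob_def ising_mu_def Sq_def conf_def Zb_def
  by (simp add: sum_divide_distrib[symmetric])

lemma phase_eq:
  assumes "\<sigma> \<in> conf"
  shows "phase L R \<sigma> = (real (card {v \<in> L. \<sigma> v = majority_spin L R \<sigma>}) / real n,
                         real (card {v \<in> R. \<sigma> v = majority_spin L R \<sigma>}) / real m)"
  unfolding phase_def Let_def cL cR ..

lemma weight_eq:
  assumes \<sigma>: "\<sigma> \<in> conf"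
  shows "ising_weight (L \<times> R) (\<lambda>_ _. \<beta>) \<sigma> = Wq (phase L R \<sigma>)"
proof -
  define s where "s = majority_spin L R \<sigma>"
  have s: "s \<in> {-1, 1}" unfolding s_def using majority_facts(1)[OF finL finR disj] \<sigma> conf_def by simp
  define i where "i = card {v \<in> L. \<sigma> v = s}"
  define j where "j = card {v \<in> R. \<sigma> v = s}"
  have vals: "\<And>v. v \<in> L \<union> R \<Longrightarrow> \<sigma> v \<in> {-1, 1}" using \<sigma> by (auto simp: conf_def spin_configs_def PiE_iff)
  have sL: "(\<Sum>u\<in>L. real_of_int (\<sigma> u)) = real_of_int s * (2 * real i - real n)"
    unfolding i_def cL[symmetric] using sum_spins[OF finL _ s] vals by auto
  have sR: "(\<Sum>u\<in>R. real_of_int (\<sigma> u)) = real_of_int s * (2 * real j - real m)"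
    unfolding j_def cR[symmetric] using sum_spins[OF finR _ s] vals by auto
  have ss: "real_of_int s * real_of_int s = 1" using s by auto
  have ph: "phase L R \<sigma> = (real i / real n, real j / real m)"
    using phase_eq[OF \<sigma>] unfolding i_def j_def s_def .
  have "\<beta> * (real_of_int s * (2 * real i - real n)) * (real_of_int s * (2 * real j - real m))
      = \<beta> * (real_of_int s * real_of_int s) * (2 * real i - real n) * (2 * real j - real m)"
    by algebra
  also have "\<dots> = \<beta> * (2 * real i - real n) * (2 * real j - real m)" unfolding ss by simp
  also have "\<dots> = real n * (\<beta> * real m) * (2 * (real i / real n) - 1) * (2 * (real j / real m) - 1)"
    using n0 m0 by (simp add: field_simps)
  finally show ?thesis unfolding weight_prod[OF finL finR] sL sR Wq_def ph by simp
qed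

lemma PZ_card: "Pb q * Zb = real (card (Sq q)) * Wq q"
proof -
  have "Pb q * Zb = (\<Sum>\<sigma>\<in>Sq q. Wq q)"
    unfolding PZ by (intro sum.cong refl) (auto simp: Sq_def weight_eq)
  then show ?thesis by simp
qed

lemma count_Tb:
  assumes "s \<in> {-1, 1}" shows "card (Tb s i j) = (n choose i) * (m choose j)"
  unfolding Tb_def conf_def spin_configs_def using count_T[OF finL finR disj assms] cL cR by simp

end

context bip begin

lemma exp_F:
  "exp (real n * Hent (a)) * exp (real m * Hent b) * Wq (a, b) =
   exp (real n * Ffun (\<beta> * real m) (real m / real n) (a, b))"
proof -
  have "real n * Ffun (\<beta> * real m) (real m / real n) (a, b) =
        real n * Hent a + real m * Hent b + real n * (\<beta> * real m) * (2 * a - 1) * (2 * b - 1)"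
    unfolding Ffun_def using n0 by (simp add: algebra_simps)
  then show ?thesis unfolding Wq_def by (simp add: exp_add)
qed

lemma finite_Tb: "finite (Tb s i j)" unfolding Tb_def using fin_conf by simp

lemma upper:
  assumes P: "Pb q > 0"
  shows "q \<in> Dom (real m / real n)"
    and "Pb q * Zb \<le> 2 * exp (real n * Ffun (\<beta> * real m) (real m / real n) q)"
proof -
  have "Sq q \<noteq> {}"
  proof
    assume "Sq q = {}"
    then have "Pb q * Zb = 0" using PZ_card by simp
    then show False using P Zpos by simp
  qed
  then obtain \<sigma>0 where \<sigma>0: "\<sigma>0 \<in> conf" "phase L R \<sigma>0 = q" unfolding Sq_def by auto
  define s0 where "s0 = majority_spin L R \<sigma>0"
  define i0 where "i0 = card {v \<in> L. \<sigma>0 v = s0}"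
  define j0 where "j0 = card {v \<in> R. \<sigma>0 v = s0}"
  have q: "q = (real i0 / real n, real j0 / real m)"
    using phase_eq[OF \<sigma>0(1)] \<sigma>0(2) unfolding i0_def j0_def s0_def by simp
  have i0: "i0 \<le> n" unfolding i0_def cL[symmetric] using finL by (intro card_mono) auto
  have j0: "j0 \<le> m" unfolding j0_def cR[symmetric] using finR by (intro card_mono) auto
  have maj: "n + m \<le> 2 * (i0 + j0)"
    using majority_facts(2)[OF finL finR disj, of \<sigma>0] \<sigma>0(1) unfolding i0_def j0_def s0_def conf_def cL cR by simp
  show "q \<in> Dom (real m / real n)"
  proof -
    have "real n + real m \<le> 2 * (real i0 + real j0)" using maj by (metis of_nat_add of_nat_le_iff of_nat_mult of_nat_numeral)
    then have "(real n + real m) / (2 * real n) \<le> (2 * (real i0 + real j0)) / (2 * real n)"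
      using n0 by (intro divide_right_mono) auto
    moreover have "(1 + real m / real n) / 2 = (real n + real m) / (2 * real n)" using n0 by (simp add: field_simps)
    moreover have "real i0 / real n + real m / real n * (real j0 / real m) = (2 * (real i0 + real j0)) / (2 * real n)"
      using n0 m0 by (simp add: field_simps)
    ultimately have "(1 + real m / real n) / 2 \<le> real i0 / real n + real m / real n * (real j0 / real m)"
      by linarith
    then show ?thesis unfolding Dom_def q using i0 j0 n0 m0 by (simp add: field_simps)
  qed
  have sub: "Sq q \<subseteq> Tb 1 i0 j0 \<union> Tb (-1) i0 j0"
  proof
    fix \<sigma> assume \<sigma>: "\<sigma> \<in> Sq q"
    then have \<sigma>c: "\<sigma> \<in> conf" and ph: "phase L R \<sigma> = q" by (auto simp: Sq_def)
    define s where "s = majority_spin L R \<sigma>"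
    have s: "s \<in> {-1, 1}" unfolding s_def using majority_facts(1)[OF finL finR disj] \<sigma>c conf_def by simp
    have "real (card {v \<in> L. \<sigma> v = s}) / real n = real i0 / real n"
      "real (card {v \<in> R. \<sigma> v = s}) / real m = real j0 / real m"
      using phase_eq[OF \<sigma>c] ph q unfolding s_def by auto
    then have "card {v \<in> L. \<sigma> v = s} = i0" "card {v \<in> R. \<sigma> v = s} = j0"
      using n0 m0 by auto
    then have "\<sigma> \<in> Tb s i0 j0" unfolding Tb_def using \<sigma>c by simp
    then show "\<sigma> \<in> Tb 1 i0 j0 \<union> Tb (-1) i0 j0" using s by auto
  qed
  have "card (Sq q) \<le> card (Tb 1 i0 j0 \<union> Tb (-1) i0 j0)"
    using sub finite_Tb by (intro card_mono) auto
  also have "\<dots> \<le> card (Tb 1 i0 j0) + card (Tb (-1) i0 j0)" by (rule card_Un_le)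
  also have "\<dots> = 2 * ((n choose i0) * (m choose j0))" using count_Tb by simp
  finally have cS: "real (card (Sq q)) \<le> 2 * (real (n choose i0) * real (m choose j0))"
    by (metis of_nat_le_iff of_nat_mult of_nat_numeral)
  have Wpos: "Wq q > 0" unfolding Wq_def by simp
  have b1: "real (n choose i0) \<le> exp (real n * Hent (real i0 / real n))" by (rule binom_upper[OF i0])
  have b2: "real (m choose j0) \<le> exp (real m * Hent (real j0 / real m))" by (rule binom_upper[OF j0])
  have "Pb q * Zb = real (card (Sq q)) * Wq q" by (rule PZ_card)
  also have "\<dots> \<le> 2 * (real (n choose i0) * real (m choose j0)) * Wq q"
    using cS Wpos by (simp add: mult_right_mono)
  also have "\<dots> \<le> 2 * (exp (real n * Hent (real i0 / real n)) * exp (real m * Hent (real j0 / real m))) * Wq q"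
    using b1 b2 Wpos by (intro mult_right_mono mult_left_mono mult_mono) auto
  also have "\<dots> = 2 * exp (real n * Ffun (\<beta> * real m) (real m / real n) q)"
    unfolding q using exp_F[of "real i0 / real n" "real j0 / real m"] by (simp add: mult.assoc)
  finally show "Pb q * Zb \<le> 2 * exp (real n * Ffun (\<beta> * real m) (real m / real n) q)" .
qed

lemma lower:
  assumes ij: "0 < i" "i < n" "0 < j" "j < m" and maj: "n + m \<le> 2 * (i + j)"
  shows "exp (real n * Ffun (\<beta> * real m) (real m / real n) (real i / real n, real j / real m))
           / ((real n + 1) * (real m + 1)) \<le> Pb (real i / real n, real j / real m) * Zb"
proof -
  define q where "q = (real i / real n, real j / real m)"
  have sub: "Tb 1 i j \<subseteq> Sq q"
  proof
    fix \<sigma> assume \<sigma>: "\<sigma> \<in> Tb 1 i j"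
    then have \<sigma>c: "\<sigma> \<in> conf" and ci: "card {v \<in> L. \<sigma> v = 1} = i" and cj: "card {v \<in> R. \<sigma> v = 1} = j"
      by (auto simp: Tb_def)
    have "card {v \<in> L \<union> R. \<sigma> v = 1} = i + j" using card_split[OF finL finR disj, of "\<lambda>v. \<sigma> v = 1"] ci cj by simp
    then have ms: "majority_spin L R \<sigma> = 1" unfolding majority_spin_def using maj cL cR by simp
    have "phase L R \<sigma> = q" using phase_eq[OF \<sigma>c] unfolding ms ci cj q_def by simp
    then show "\<sigma> \<in> Sq q" using \<sigma>c by (simp add: Sq_def)
  qed
  have fS: "finite (Sq q)" unfolding Sq_def using fin_conf by simp
  have "(n choose i) * (m choose j) \<le> card (Sq q)"
    using card_mono[OF fS sub] count_Tb[of 1 i j] by simp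
  then have cS: "real (n choose i) * real (m choose j) \<le> real (card (Sq q))"
    by (metis of_nat_le_iff of_nat_mult)
  have Wpos: "Wq q > 0" unfolding Wq_def by simp
  have b1: "exp (real n * Hent (real i / real n)) / (real n + 1) \<le> real (n choose i)" by (rule binom_lower[OF ij(1,2)])
  have b2: "exp (real m * Hent (real j / real m)) / (real m + 1) \<le> real (m choose j)" by (rule binom_lower[OF ij(3,4)])
  have "exp (real n * Ffun (\<beta> * real m) (real m / real n) q) / ((real n + 1) * (real m + 1))
      = (exp (real n * Hent (real i / real n)) / (real n + 1)) * (exp (real m * Hent (real j / real m)) / (real m + 1)) * Wq q"
    unfolding q_def exp_F[symmetric] by (simp add: field_simps)
  also have "\<dots> \<le> real (n choose i) * real (m choose j) * Wq q"
    using b1 b2 Wpos by (intro mult_right_mono mult_mono) auto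
  also have "\<dots> \<le> real (card (Sq q)) * Wq q" using cS Wpos by (simp add: mult_right_mono)
  also have "\<dots> = Pb q * Zb" by (rule PZ_card[symmetric])
  finally show ?thesis unfolding q_def .
qed

end

lemma conv_from_max:
  fixes F :: "real \<times> real \<Rightarrow> real" and x :: "nat \<Rightarrow> real \<times> real" and e :: "nat \<Rightarrow> real"
  assumes D: "compact D" and cF: "continuous_on D F" and p: "p \<in> D"
    and mx: "\<And>q. q \<in> D \<Longrightarrow> q \<noteq> p \<Longrightarrow> F q < F p"
    and ev: "eventually (\<lambda>n. x n \<in> D \<and> F p - e n \<le> F (x n)) sequentially"
    and e: "e \<longlonglongrightarrow> 0"
  shows "x \<longlonglongrightarrow> p"
proof (rule tendstoI)
  fix \<epsilon> :: real assume \<epsilon>: "\<epsilon> > 0"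
  define Ke where "Ke = D \<inter> {q. \<epsilon> \<le> dist q p}"
  have cK: "compact Ke" unfolding Ke_def
    by (intro compact_Int_closed D closed_Collect_le continuous_intros)
  show "eventually (\<lambda>n. dist (x n) p < \<epsilon>) sequentially"
  proof (cases "Ke = {}")
    case True
    show ?thesis using ev by eventually_elim (use True in \<open>auto simp: Ke_def not_le\<close>)
  next
    case False
    have "continuous_on Ke F" using cF by (rule continuous_on_subset) (auto simp: Ke_def)
    then obtain qm where qm: "qm \<in> Ke" "\<And>t. t \<in> Ke \<Longrightarrow> F t \<le> F qm"
      using continuous_attains_sup[OF cK False] by blast
    have "qm \<noteq> p" using qm(1) \<epsilon> by (auto simp: Ke_def)
    then have "F qm < F p" using mx qm(1) by (auto simp: Ke_def)
    then have "eventually (\<lambda>n. e n < F p - F qm) sequentially"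
      using order_tendstoD(2)[OF e] by simp
    then show ?thesis using ev
    proof eventually_elim
      case (elim n)
      then have "F (x n) > F qm" by simp
      then have "x n \<notin> Ke" using qm(2)[of "x n"] by linarith
      then show ?case using elim by (auto simp: Ke_def not_le)
    qed
  qed
qed

lemma Dom_eq: "Dom K = ({0..1} \<times> {0..1}) \<inter> {q. (1 + K) / 2 \<le> fst q + K * snd q}"
  unfolding Dom_def by auto

lemma compact_Dom: "compact (Dom K)"
  unfolding Dom_eq
  by (intro compact_Int_closed compact_Times compact_Icc closed_Collect_le continuous_intros)

lemma cont_Ffun01: "continuous_on ({0..1} \<times> {0..1}) (Ffun c K)"
proof -
  have h1: "continuous_on ({0..1} \<times> {0..1}) (\<lambda>q::real\<times>real. Hent (fst q))"
    by (rule continuous_on_compose2[OF cont_Hent]) (auto intro!: continuous_intros)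
  have h2: "continuous_on ({0..1} \<times> {0..1}) (\<lambda>q::real\<times>real. Hent (snd q))"
    by (rule continuous_on_compose2[OF cont_Hent]) (auto intro!: continuous_intros)
  show ?thesis unfolding Ffun_def[abs_def]
    by (intro continuous_on_add continuous_on_mult continuous_on_const h1 h2 continuous_intros)
qed

lemma cont_Ffun: "continuous_on (Dom K) (Ffun c K)"
  by (rule continuous_on_subset[OF cont_Ffun01]) (auto simp: Dom_def)

lemma Ffun_diff:
  assumes "0 \<le> fst q" "fst q \<le> 1" "0 \<le> snd q" "snd q \<le> 1"
  shows "\<bar>Ffun c1 K q - Ffun c2 K q\<bar> \<le> \<bar>c1 - c2\<bar>"
proof -
  have "\<bar>(2 * fst q - 1) * (2 * snd q - 1)\<bar> \<le> 1 * 1"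
    unfolding abs_mult using assms by (intro mult_mono) auto
  then have "\<bar>c1 - c2\<bar> * \<bar>(2 * fst q - 1) * (2 * snd q - 1)\<bar> \<le> \<bar>c1 - c2\<bar>"
    by (simp add: mult_left_le)
  moreover have "Ffun c1 K q - Ffun c2 K q = (c1 - c2) * ((2 * fst q - 1) * (2 * snd q - 1))"
    unfolding Ffun_def by (simp add: algebra_simps)
  ultimately show ?thesis by (simp add: abs_mult)
qed

lemma eq_conv:
  fixes a t :: real assumes "0 < a" "a < 1"
  shows "exp (-2 * t) = (1 - a) / a \<longleftrightarrow> artanh (2 * a - 1) = t"
proof -
  have "(1 + (2 * a - 1)) / (1 - (2 * a - 1)) = a / (1 - a)" using assms by (simp add: field_simps)
  then have "artanh (2 * a - 1) = ln (a / (1 - a)) / 2" by (simp add: artanh_def)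
  then have "-2 * artanh (2 * a - 1) = ln ((1 - a) / a)" using assms by (simp add: ln_div)
  then have e: "exp (-2 * artanh (2 * a - 1)) = (1 - a) / a" using assms by simp
  show ?thesis unfolding e[symmetric] by auto
qed

lemma lim_cn:
  fixes B S :: real assumes "B > 0" "S > 0"
  shows "(\<lambda>n::nat. - (1/2) * ln (1 - B / (real n * S)) * (S^2 * real n)) \<longlonglongrightarrow> B * inverse S * S^2 / 2"
  using assms by real_asymp

lemma lim_log:
  fixes K :: real assumes "K > 0"
  shows "(\<lambda>n::nat. ln (2 * (real n + 1) * (K * real n + 1)) / real n) \<longlonglongrightarrow> 0"
  using assms by real_asymp

lemma lim_inv: "(\<lambda>n::nat. a + 1 / real n) \<longlonglongrightarrow> (a::real)"
  by real_asymp

lemma VL_facts: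
  shows "finite (VLn n)" "card (VLn n) = n" "finite (VRn k n)" "card (VRn k n) = k * n"
    "VLn n \<inter> VRn k n = {}"
  unfolding VLn_def VRn_def by (auto simp: card_image)

lemma ceil_facts:
  fixes x :: real assumes "0 \<le> x"
  shows "x \<le> real (nat \<lceil>x\<rceil>)" "real (nat \<lceil>x\<rceil>) < x + 1"
proof -
  have "real (nat \<lceil>x\<rceil>) = real_of_int \<lceil>x\<rceil>" using assms by simp
  then show "x \<le> real (nat \<lceil>x\<rceil>)" "real (nat \<lceil>x\<rceil>) < x + 1"
    by (simp_all add: le_of_int_ceiling) linarith
qed

lemma eventually_real_ge: "eventually (\<lambda>n::nat. M \<le> real n) sequentially"
proof -
  obtain N :: nat where "M \<le> real N" using real_arch_simple by blast
  have "eventually (\<lambda>n. N \<le> n) sequentially" by (rule eventually_ge_at_top)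
  then show ?thesis
  proof eventually_elim
    case (elim n) then show ?case using \<open>M \<le> real N\<close> 
    proof -
      have "real N \<le> real n" using elim by simp
      then show ?thesis using \<open>M \<le> real N\<close> by linarith
    qed
  qed
qed

lemma nat_div_le1: "(x::nat) \<le> y \<Longrightarrow> real x / real y \<le> 1"
  by (cases "y = 0") (auto simp: divide_le_eq_1)

lemma nat_div01: "(x::nat) \<le> y \<Longrightarrow> (real x / real y) \<in> {0..1}"
  using nat_div_le1[of x y] by auto

lemma main_conv:
  fixes k :: nat and B :: real and ahat :: "nat \<Rightarrow> real \<times> real" and p :: "real \<times> real"
  assumes k: "k \<ge> 1" and B: "B > 0"
    and max: "\<And>n a. Pr_bip k B n a \<le> Pr_bip k B n (ahat n)"
    and p: "1/2 \<le> fst p" "fst p < 1" "1/2 \<le> snd p" "snd p < 1"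
    and pD: "p \<in> Dom (real k)"
    and smax: "\<And>q. q \<in> Dom (real k) \<Longrightarrow> q \<noteq> p \<Longrightarrow>
        Ffun (B * sqrt (real k) / 2) (real k) q < Ffun (B * sqrt (real k) / 2) (real k) p"
  shows "ahat \<longlonglongrightarrow> p"
proof -
  define K where "K = real k"
  define c where "c = B * sqrt K / 2"
  define F where "F = Ffun c K"
  define cn where "cn = (\<lambda>n. beta_n k B n * real (k * n))"
  define a where "a = fst p"
  define b where "b = snd p"
  define i where "i = (\<lambda>n::nat. nat \<lceil>real n * a\<rceil>)"
  define j where "j = (\<lambda>n::nat. nat \<lceil>real (k * n) * b\<rceil>)"
  define qn where "qn = (\<lambda>n. (real (i n) / real n, real (j n) / real (k * n)))"
  define Lg where "Lg = (\<lambda>n::nat. ln (2 * (real n + 1) * (K * real n + 1)) / real n)"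
  define e where "e = (\<lambda>n. \<bar>F p - F (qn n)\<bar> + 2 * \<bar>cn n - c\<bar> + Lg n)"
  have K0: "K > 0" "K \<ge> 1" using k by (auto simp: K_def)
  have pab: "p = (a, b)" by (simp add: a_def b_def)
  have ab: "1/2 \<le> a" "a < 1" "1/2 \<le> b" "b < 1" using p by (auto simp: a_def b_def)
  have cn_lim: "cn \<longlonglongrightarrow> c"
  proof -
    have S: "sqrt K > 0" using K0 by simp
    have "(\<lambda>n::nat. - (1/2) * ln (1 - B / (real n * sqrt K)) * (sqrt K ^ 2 * real n))
          \<longlonglongrightarrow> B * inverse (sqrt K) * sqrt K ^ 2 / 2"
      by (rule lim_cn[OF B S])
    moreover have "B * inverse (sqrt K) * sqrt K ^ 2 / 2 = c" unfolding c_def using S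
      by (simp add: power2_eq_square field_simps)
    moreover have "(\<lambda>n::nat. - (1/2) * ln (1 - B / (real n * sqrt K)) * (sqrt K ^ 2 * real n)) = cn"
    proof (rule ext)
      fix n
      have "sqrt K ^ 2 * real n = real (k * n)" using K0 by (simp add: K_def)
      then show "- (1/2) * ln (1 - B / (real n * sqrt K)) * (sqrt K ^ 2 * real n) = cn n"
        unfolding cn_def beta_n_def K_def by simp
    qed
    ultimately show ?thesis by simp
  qed
  have EV: "eventually (\<lambda>n. 1 \<le> real n \<and> 1 / (1 - a) \<le> real n \<and> 1 / (1 - b) \<le> real n) sequentially"
    using eventually_real_ge[of 1] eventually_real_ge[of "1 / (1 - a)"] eventually_real_ge[of "1 / (1 - b)"]
    by eventually_elim auto
  have good: "0 < i n \<and> i n < n \<and> 0 < j n \<and> j n < k * n \<and> n + k * n \<le> 2 * (i n + j n)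
      \<and> real n * a \<le> real (i n) \<and> real (i n) < real n * a + 1
      \<and> real (k * n) * b \<le> real (j n) \<and> real (j n) < real (k * n) * b + 1"
    if n: "1 \<le> real n" "1 / (1 - a) \<le> real n" "1 / (1 - b) \<le> real n" for n
  proof -
    have n0: "real n > 0" using n by simp
    have kn: "real (k * n) \<ge> real n" using K0 n0 by (simp add: K_def)
    have i1: "real n * a \<le> real (i n)" "real (i n) < real n * a + 1"
      unfolding i_def using ceil_facts[of "real n * a"] ab n0 by auto
    have j1: "real (k * n) * b \<le> real (j n)" "real (j n) < real (k * n) * b + 1"
      unfolding j_def using ceil_facts[of "real (k * n) * b"] ab by auto
    have na: "real n * (1 - a) \<ge> 1" using n(2) ab by (simp add: field_simps)
    have nb: "real n * (1 - b) \<ge> 1" using n(3) ab by (simp add: field_simps)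
    have knb: "real (k * n) * (1 - b) \<ge> 1"
      using nb kn ab by (smt (verit) mult_right_mono)
    have "real n * a > 0" using n0 ab by simp
    then have g1: "0 < i n" using i1 by simp
    have "real (i n) < real n" using i1 na by (simp add: algebra_simps)
    then have g2: "i n < n" by simp
    have "real (k * n) * b > 0" using n0 ab K0 by (simp add: K_def)
    then have g3: "0 < j n" using j1 by simp
    have "real (j n) < real (k * n)" using j1 knb by (simp add: algebra_simps)
    then have g4: "j n < k * n" by (simp only: of_nat_less_iff)
    have "real n + real (k * n) \<le> 2 * (real (i n) + real (j n))"
    proof -
      have "real n \<le> 2 * (real n * a)" using ab n0 by simp
      moreover have "real (k * n) \<le> 2 * (real (k * n) * b)"
      proof -
        have "real (k * n) * 1 \<le> real (k * n) * (2 * b)" using ab by (intro mult_left_mono) auto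
        then show ?thesis by (simp add: algebra_simps)
      qed
      ultimately show ?thesis using i1(1) j1(1) by argo
    qed
    then have "real (n + k * n) \<le> real (2 * (i n + j n))" by simp
    then have g5: "n + k * n \<le> 2 * (i n + j n)" by (simp only: of_nat_le_iff)
    show ?thesis using g1 g2 g3 g4 g5 i1 j1 by blast
  qed
  have qn_lim: "qn \<longlonglongrightarrow> p"
  proof -
    have l1: "(\<lambda>n. real (i n) / real n) \<longlonglongrightarrow> a"
    proof (rule tendsto_sandwich[OF _ _ tendsto_const lim_inv])
      show "eventually (\<lambda>n. a \<le> real (i n) / real n) sequentially" using EV
      proof eventually_elim
        case (elim n) then show ?case using good[of n] by (simp add: field_simps)
      qed
      show "eventually (\<lambda>n. real (i n) / real n \<le> a + 1 / real n) sequentially" using EV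
      proof eventually_elim
        case (elim n)
        then have "real (i n) < real n * a + 1" "real n > 0" using good[of n] by auto
        then show ?case by (simp add: field_simps)
      qed
    qed
    have l2: "(\<lambda>n. real (j n) / real (k * n)) \<longlonglongrightarrow> b"
    proof (rule tendsto_sandwich[OF _ _ tendsto_const lim_inv])
      show "eventually (\<lambda>n. b \<le> real (j n) / real (k * n)) sequentially" using EV
      proof eventually_elim
        case (elim n)
        then have "real (k * n) * b \<le> real (j n)" "real (k * n) > 0" using good[of n] K0 by (auto simp: K_def)
        then show ?case by (simp add: field_simps)
      qed
      show "eventually (\<lambda>n. real (j n) / real (k * n) \<le> b + 1 / real n) sequentially" using EV
      proof eventually_elim
        case (elim n)
        then have a1: "real (j n) < real (k * n) * b + 1" and n0: "real n > 0" using good[of n] by auto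
        have kn: "real (k * n) \<ge> real n" using K0 n0 by (simp add: K_def)
        have kn0: "real (k * n) > 0" using kn n0 by linarith
        have "real (j n) / real (k * n) \<le> (real (k * n) * b + 1) / real (k * n)"
          using a1 kn0 by (intro divide_right_mono) auto
        also have "\<dots> = b + 1 / real (k * n)"
          using kn0 by (simp only: add_divide_distrib) (metis less_irrefl nonzero_mult_div_cancel_left)
        finally have "real (j n) / real (k * n) \<le> b + 1 / real (k * n)" .
        also have "1 / real (k * n) \<le> 1 / real n" using kn n0 by (simp add: frac_le)
        finally show ?case by simp
      qed
    qed
    show ?thesis unfolding qn_def pab using tendsto_Pair[OF l1 l2] .
  qed
  have q01: "eventually (\<lambda>n. qn n \<in> {0..1} \<times> {0..1}) sequentially" using EV
  proof eventually_elim
    case (elim n)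
    then have "i n < n" "j n < k * n" using good[of n] by auto
    then have "real (i n) / real n \<in> {0..1}" "real (j n) / real (k * n) \<in> {0..1}"
      by (intro nat_div01; simp)+
    then show ?case unfolding qn_def mem_Times_iff fst_conv snd_conv by blast
  qed
  have p01: "p \<in> {0..1} \<times> {0..1}" using ab pab by auto
  have e_lim: "e \<longlonglongrightarrow> 0"
  proof -
    have "(\<lambda>n. F (qn n)) \<longlonglongrightarrow> F p"
      unfolding F_def by (rule continuous_on_tendsto_compose[OF cont_Ffun01 qn_lim p01 q01])
    then have t1: "(\<lambda>n. \<bar>F p - F (qn n)\<bar>) \<longlonglongrightarrow> 0"
      using tendsto_rabs[OF tendsto_diff[OF tendsto_const[of "F p"]]] by fastforce
    have t2: "(\<lambda>n. 2 * \<bar>cn n - c\<bar>) \<longlonglongrightarrow> 0"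
      using tendsto_mult[OF tendsto_const[of 2] tendsto_rabs[OF tendsto_diff[OF cn_lim tendsto_const[of c]]]] by simp
    have t3: "Lg \<longlonglongrightarrow> 0" unfolding Lg_def by (rule lim_log[OF K0(1)])
    show ?thesis unfolding e_def using tendsto_add[OF tendsto_add[OF t1 t2] t3] by simp
  qed
  have ev: "eventually (\<lambda>n. ahat n \<in> Dom K \<and> F p - e n \<le> F (ahat n)) sequentially" using EV
  proof eventually_elim
    case (elim n)
    note g = good[OF elim[THEN conjunct1] elim[THEN conjunct2, THEN conjunct1] elim[THEN conjunct2, THEN conjunct2]]
    have n0: "n > 0" using g by simp
    have kn0: "k * n > 0" using n0 k by simp
    interpret bip "VLn n" "VRn k n" n "k * n" "beta_n k B n"
      by unfold_locales (use VL_facts n0 kn0 in auto)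
    have PB: "\<And>q. Pb q = Pr_bip k B n q" unfolding Pb_def Pr_bip_def ..
    have Km: "real (k * n) / real n = K" using n0 by (simp add: K_def)
    have cm: "beta_n k B n * real (k * n) = cn n" by (simp add: cn_def)
    define Fn where "Fn = Ffun (cn n) K"
    define D where "D = (real n + 1) * (real (k * n) + 1)"
    have D0: "D > 0" unfolding D_def by (intro mult_pos_pos add_nonneg_pos) auto
    have low: "exp (real n * Fn (qn n)) / D \<le> Pb (qn n) * Zb"
      using lower[of "i n" "j n"] g unfolding Km cm Fn_def D_def qn_def by auto
    have "Pb (qn n) * Zb \<le> Pb (ahat n) * Zb" using max[of n "qn n"] Zpos unfolding PB by simp
    with low have chain: "exp (real n * Fn (qn n)) / D \<le> Pb (ahat n) * Zb" by linarith
    have "exp (real n * Fn (qn n)) / D > 0" using D0 by simp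
    then have "Pb (ahat n) * Zb > 0" using chain by linarith
    then have Ppos: "Pb (ahat n) > 0" using Zpos by (simp add: zero_less_mult_iff)
    have aD: "ahat n \<in> Dom K" using upper(1)[OF Ppos] unfolding Km .
    have up: "Pb (ahat n) * Zb \<le> 2 * exp (real n * Fn (ahat n))"
      using upper(2)[OF Ppos] unfolding Km cm Fn_def .
    have ineq: "exp (real n * Fn (qn n)) / D \<le> 2 * exp (real n * Fn (ahat n))" using chain up by linarith
    have "ln (exp (real n * Fn (qn n)) / D) \<le> ln (2 * exp (real n * Fn (ahat n)))"
      using ineq D0 by (subst ln_le_cancel_iff) auto
    then have "real n * Fn (qn n) - ln D \<le> ln 2 + real n * Fn (ahat n)"
      using D0 by (simp add: ln_div ln_mult)
    then have "real n * Fn (qn n) \<le> real n * (Fn (ahat n) + Lg n)"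
    proof -
      assume h: "real n * Fn (qn n) - ln D \<le> ln 2 + real n * Fn (ahat n)"
      have "ln (2 * D) = ln 2 + ln D" using D0 by (simp add: ln_mult)
      moreover have "2 * D = 2 * (real n + 1) * (K * real n + 1)" unfolding D_def K_def by simp
      ultimately have "real n * Lg n = ln 2 + ln D" unfolding Lg_def using n0 by simp
      then show ?thesis using h by (simp add: algebra_simps)
    qed
    then have fq: "Fn (qn n) \<le> Fn (ahat n) + Lg n" using n0 by simp
    have "real (i n) / real n \<in> {0..1}" "real (j n) / real (k * n) \<in> {0..1}"
      using g by (intro nat_div01; simp)+
    then have q1: "qn n \<in> {0..1} \<times> {0..1}" unfolding qn_def mem_Times_iff fst_conv snd_conv by blast
    have a1: "0 \<le> fst (ahat n)" "fst (ahat n) \<le> 1" "0 \<le> snd (ahat n)" "snd (ahat n) \<le> 1"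
      using aD by (auto simp: Dom_def)
    have d1: "\<bar>Fn (ahat n) - F (ahat n)\<bar> \<le> \<bar>cn n - c\<bar>" unfolding Fn_def F_def by (rule Ffun_diff[OF a1])
    have d2: "\<bar>Fn (qn n) - F (qn n)\<bar> \<le> \<bar>cn n - c\<bar>" unfolding Fn_def F_def using q1 by (intro Ffun_diff) auto
    have "F p - e n \<le> F (ahat n)" unfolding e_def using fq abs_le_D1[OF d1] abs_le_D2[OF d2] abs_ge_self[of "F p - F (qn n)"]
      by argo
    then show ?case using aD by simp
  qed
  have smax': "\<And>q. q \<in> Dom K \<Longrightarrow> q \<noteq> p \<Longrightarrow> F q < F p"
    using smax unfolding F_def c_def K_def .
  have cF: "continuous_on (Dom K) F" unfolding F_def by (rule cont_Ffun)
  have pD': "p \<in> Dom K" using pD by (simp add: K_def)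
  show ?thesis by (rule conv_from_max[OF compact_Dom cF pD' smax' ev e_lim])
qed

lemma eqs_iff:
  fixes K B a b :: real
  assumes K: "K > 0" and ab: "0 < a" "a < 1" "0 < b" "b < 1"
  shows "exp (B * sqrt K * (1 - 2 * b)) = (1 - a) / a \<longleftrightarrow> artanh (2 * a - 1) = (B * sqrt K / 2) * (2 * b - 1)"
    and "exp (B / sqrt K * (1 - 2 * a)) = (1 - b) / b \<longleftrightarrow> artanh (2 * b - 1) = (B * sqrt K / 2) / K * (2 * a - 1)"
proof -
  have e1: "B * sqrt K * (1 - 2 * b) = -2 * ((B * sqrt K / 2) * (2 * b - 1))" by (simp add: algebra_simps)
  show "exp (B * sqrt K * (1 - 2 * b)) = (1 - a) / a \<longleftrightarrow> artanh (2 * a - 1) = (B * sqrt K / 2) * (2 * b - 1)"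
    unfolding e1 by (rule eq_conv[OF ab(1,2)])
  have S: "sqrt K > 0" using K by simp
  have KK: "K = sqrt K * sqrt K" using K by simp
  have cKeq: "(B * sqrt K / 2) / K = B / sqrt K / 2" using S by (subst KK) (simp add: field_simps)
  have e2a: "B / sqrt K * (1 - 2 * a) = -2 * (B / sqrt K / 2 * (2 * a - 1))" using S by (simp add: field_simps)
  have e2: "B / sqrt K * (1 - 2 * a) = -2 * ((B * sqrt K / 2) / K * (2 * a - 1))" by (simp only: cKeq e2a)
  show "exp (B / sqrt K * (1 - 2 * a)) = (1 - b) / b \<longleftrightarrow> artanh (2 * b - 1) = (B * sqrt K / 2) / K * (2 * a - 1)"
    unfolding e2 by (rule eq_conv[OF ab(3,4)])
qed

theorem lemma11:
  fixes k :: nat and B :: real and ahat :: "nat \<Rightarrow> real \<times> real"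
  assumes "k \<ge> 1" and "B > 0"
    and max: "\<And>n a. Pr_bip k B n a \<le> Pr_bip k B n (ahat n)"
  shows "(B \<le> 2 \<longrightarrow> ahat \<longlonglongrightarrow> (1/2, 1/2))
       \<and> (B > 2 \<longrightarrow>
           (\<exists>!p. p \<in> {1/2<..<1} \<times> {1/2<..<1}
                 \<and> exp (B * sqrt (real k) * (1 - 2 * snd p)) = (1 - fst p) / fst p
                 \<and> exp (B / sqrt (real k) * (1 - 2 * fst p)) = (1 - snd p) / snd p)
         \<and> (\<forall>p. p \<in> {1/2<..<1} \<times> {1/2<..<1}
                 \<and> exp (B * sqrt (real k) * (1 - 2 * snd p)) = (1 - fst p) / fst p
                 \<and> exp (B / sqrt (real k) * (1 - 2 * fst p)) = (1 - snd p) / snd p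
                 \<longrightarrow> ahat \<longlonglongrightarrow> p))"
proof -
  note k = assms(1) and B = assms(2)
  define K where "K = real k"
  define c where "c = B * sqrt K / 2"
  have K0: "K > 0" "K \<ge> 1" using k by (auto simp: K_def)
  have S: "sqrt K > 0" using K0 by simp
  have c0: "c > 0" unfolding c_def using B S by simp
  have part1: "B \<le> 2 \<longrightarrow> ahat \<longlonglongrightarrow> (1/2, 1/2)"
  proof
    assume B2: "B \<le> 2"
    have csq: "c \<le> sqrt K" unfolding c_def using B2 S B by (simp add: field_simps)
    show "ahat \<longlonglongrightarrow> (1/2, 1/2)"
    proof (rule main_conv[OF k B max])
      show "(1/2, 1/2) \<in> Dom (real k)" unfolding Dom_def by (simp add: field_simps)
      fix q assume q: "q \<in> Dom (real k)" "q \<noteq> (1/2, 1/2)"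
      have q01: "0 \<le> fst q" "fst q \<le> 1" "0 \<le> snd q" "snd q \<le> 1" using q(1) by (simp_all add: Dom_def)
      show "Ffun (B * sqrt (real k) / 2) (real k) q < Ffun (B * sqrt (real k) / 2) (real k) (1/2, 1/2)"
        using Fmax_small[OF K0(1) less_imp_le[OF c0] csq q01 q(2)] unfolding c_def K_def .
    qed auto
  qed
  have part2: "B > 2 \<longrightarrow>
           (\<exists>!p. p \<in> {1/2<..<1} \<times> {1/2<..<1}
                 \<and> exp (B * sqrt (real k) * (1 - 2 * snd p)) = (1 - fst p) / fst p
                 \<and> exp (B / sqrt (real k) * (1 - 2 * fst p)) = (1 - snd p) / snd p)
         \<and> (\<forall>p. p \<in> {1/2<..<1} \<times> {1/2<..<1}
                 \<and> exp (B * sqrt (real k) * (1 - 2 * snd p)) = (1 - fst p) / fst p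
                 \<and> exp (B / sqrt (real k) * (1 - 2 * fst p)) = (1 - snd p) / snd p
                 \<longrightarrow> ahat \<longlonglongrightarrow> p)"
  proof
    assume B2: "B > 2"
    define Pp where "Pp = (\<lambda>p::real\<times>real. p \<in> {1/2<..<1} \<times> {1/2<..<1}
                 \<and> exp (B * sqrt (real k) * (1 - 2 * snd p)) = (1 - fst p) / fst p
                 \<and> exp (B / sqrt (real k) * (1 - 2 * fst p)) = (1 - snd p) / snd p)"
    have e: "c^2 = K * B^2 / 4" unfolding c_def using K0 by (simp add: power_mult_distrib power_divide algebra_simps)
    have "B^2 > 2^2" using B2 by (intro power_strict_mono) auto
    then have "K * 2^2 < K * B^2" using K0 by (intro mult_strict_left_mono) auto
    then have "K * 2^2 / 4 < K * B^2 / 4" by (rule divide_strict_right_mono) simp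
    then have cK: "K < c^2" unfolding e by simp
    obtain ys where ys: "0 < ys" "ys < 1" "hfun c ys = c / K" using hfun_exists[OF c0 K0(1) cK] by blast
    define xs where "xs = tanh (c * ys)"
    have xs: "0 < xs" "xs < 1" unfolding xs_def using c0 ys tanh_real_lt_1 by auto
    define p0 where "p0 = ((1 + xs) / 2, (1 + ys) / 2)"
    have axs: "artanh xs = c * ys" unfolding xs_def by (rule artanh_tanh_real)
    have ays: "artanh ys = c / K * xs"
      using ys(3) xs unfolding hfun_def xs_def[symmetric] by (simp add: field_simps)
    have iff: "Pp p \<longleftrightarrow> (0 < 2 * fst p - 1 \<and> 2 * fst p - 1 < 1 \<and> 0 < 2 * snd p - 1 \<and> 2 * snd p - 1 < 1
               \<and> artanh (2 * fst p - 1) = c * (2 * snd p - 1) \<and> artanh (2 * snd p - 1) = c / K * (2 * fst p - 1))"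
      for p :: "real \<times> real"
    proof (cases "p \<in> {1/2<..<1} \<times> {1/2<..<1}")
      case True
      then have ab: "0 < fst p" "fst p < 1" "0 < snd p" "snd p < 1" by (auto simp: mem_Times_iff)
      have r1: "0 < 2 * fst p - 1" "2 * fst p - 1 < 1" "0 < 2 * snd p - 1" "2 * snd p - 1 < 1"
        using True by (auto simp: mem_Times_iff)
      show ?thesis unfolding Pp_def using True r1 eqs_iff[OF K0(1) ab, of B] unfolding c_def K_def
        by simp
    next
      case False
      then show ?thesis unfolding Pp_def by (auto simp: mem_Times_iff)
    qed
    have ex: "2 * ((1 + xs) / 2) - 1 = xs" and ey: "2 * ((1 + ys) / 2) - 1 = ys" by (simp_all add: field_simps)
    have Pp0: "Pp p0" unfolding iff p0_def fst_conv snd_conv ex ey using xs ys axs ays by simp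
    have uniq: "p = p0" if "Pp p" for p
    proof -
      define x where "x = 2 * fst p - 1"
      define y where "y = 2 * snd p - 1"
      have h: "0 < x" "x < 1" "0 < y" "y < 1" "artanh x = c * y" "artanh y = c / K * x"
        using that unfolding iff x_def y_def by auto
      have xt: "x = tanh (c * y)" using tanh_artanh[of x] h by simp
      have "hfun c y = c / K" unfolding hfun_def using h xt[symmetric] by simp
      then have "y = ys" using hfun_inj[OF c0 h(3,4) ys(1,2)] ys(3) by simp
      then have "x = xs" using xt xs_def by simp
      then show ?thesis unfolding p0_def using \<open>y = ys\<close> x_def y_def by (cases p) simp
    qed
    have conv: "ahat \<longlonglongrightarrow> p0"
    proof (rule main_conv[OF k B max])
      show "1/2 \<le> fst p0" "fst p0 < 1" "1/2 \<le> snd p0" "snd p0 < 1" using xs ys unfolding p0_def by auto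
      have "(1 + K) / 2 \<le> (1 + xs) / 2 + K * ((1 + ys) / 2)"
        using xs ys K0 by (simp add: field_simps)
      then show "p0 \<in> Dom (real k)" unfolding Dom_def p0_def K_def using xs ys by auto
      fix q assume q: "q \<in> Dom (real k)" "q \<noteq> p0"
      show "Ffun (B * sqrt (real k) / 2) (real k) q < Ffun (B * sqrt (real k) / 2) (real k) p0"
        using Fmax_large[OF c0 K0(1) ys, of q] q unfolding p0_def xs_def c_def K_def by simp
    qed
    have "(\<exists>!p. Pp p) \<and> (\<forall>p. Pp p \<longrightarrow> ahat \<longlonglongrightarrow> p)"
      using Pp0 uniq conv by blast
    then show "(\<exists>!p. p \<in> {1/2<..<1} \<times> {1/2<..<1}
                 \<and> exp (B * sqrt (real k) * (1 - 2 * snd p)) = (1 - fst p) / fst p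
                 \<and> exp (B / sqrt (real k) * (1 - 2 * fst p)) = (1 - snd p) / snd p)
         \<and> (\<forall>p. p \<in> {1/2<..<1} \<times> {1/2<..<1}
                 \<and> exp (B * sqrt (real k) * (1 - 2 * snd p)) = (1 - fst p) / fst p
                 \<and> exp (B / sqrt (real k) * (1 - 2 * fst p)) = (1 - snd p) / snd p
                 \<longrightarrow> ahat \<longlonglongrightarrow> p)" unfolding Pp_def .
  qed
  show ?thesis using part1 part2 by blast
qed

end
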